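(* Let $\mathcal H$ be a complex Hilbert space of finite dimension, let $\hat H=\sum_{r=1}^DE_r\hat P_r$ be a Hermitian operator with distinct eigenvalues $E_1,\dots,E_D$ and eigenprojections $\hat P_r$, let $\hat\rho_0$ be a density matrix on $\mathcal H$, set $p_r=\mathrm{tr}\,\hat\rho_0\hat P_r$, and let $\hbar>0$, $\sigma>0$. On a probability space $(\Omega,\mathcal F,\mathbb P)$ let $\{B_t\}$ be a standard Brownian motion and $H$ an independent random variable with $\mathbb P[H=E_r]=p_r$. Let $\xi_t=\sigma tH+B_t$, let $\{\mathcal F_t\}$ be the filtration generated by $\{\xi_t\}$, $\mathbb E_t[\cdot]=\mathbb E[\cdot|\mathcal F_t]$, and define $$\hat K_t=\exp\Big[-\mathrm i\hbar^{-1}\hat Ht+\tfrac12\sigma\hat H\xi_t-\tfrac14\sigma^2\hat H^2t\Big],\qquad \hat\rho_t=\frac{\hat K_t\hat\rho_0\hat K_t^*}{\mathrm{tr}[\hat K_t\hat\rho_0\hat K_t^*]},$$ and for $n\neq m$ $$\Phi_{nm\,t}=\frac{\exp[\frac12\sigma(E_n+E_m)\xi_t-\frac18\sigma^2(E_n+E_m)^2t]}{\sum_{r=1}^Dp_r\exp[\sigma E_r\xi_t-\frac12\sigma^2E_r^2t]}\exp\big[-\tfrac18\sigma^2(E_n-E_m)^2t\big].$$ Then $$\hat\rho_t=\sum_{n:\,p_n>0}\mathbb E_t[\mathds 1(H=E_n)]\frac{\hat P_n\hat\rho_0\hat P_n}{\mathrm{tr}\,\hat\rho_0\hat P_n}+\sum_{n,m=1,\;n\neq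 m}^D\hat P_n\hat\rho_0\hat P_m\exp[-\mathrm i\hbar^{-1}(E_n-E_m)t]\,\Phi_{nm\,t}.$$
   Context: $\mathds 1(\cdot)$ denotes the indicator function. *)

theory Defs
  imports "HOL-Analysis.Analysis" "HOL-Probability.Probability"
begin

text \<open>The Hilbert space is complex^'n for a finite type 'n (standard inner product
  sum_i cnj (x i) * y i); operators are complex matrices complex^'n^'n.\<close>

definition cscale :: "complex \<Rightarrow> complex^'n^'n \<Rightarrow> complex^'n^'n" where
  "cscale c A = (\<chi> i j. c * A$i$j)"

definition adjoint_mat :: "complex^'n^'n \<Rightarrow> complex^'n^'n" where
  "adjoint_mat A = (\<chi> i j. cnj (A$j$i))"

definition hermitian_mat :: "complex^'n^'n \<Rightarrow> bool" where
  "hermitian_mat A \<longleftrightarrow> adjoint_mat A = A"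

definition cinner :: "complex^'n \<Rightarrow> complex^'n \<Rightarrow> complex" where
  "cinner x y = (\<Sum>i\<in>UNIV. cnj (x$i) * y$i)"

definition density_matrix :: "complex^'n^'n \<Rightarrow> bool" where
  "density_matrix \<rho> \<longleftrightarrow> hermitian_mat \<rho> \<and>
     (\<forall>x. Im (cinner x (\<rho> *v x)) = 0 \<and> Re (cinner x (\<rho> *v x)) \<ge> 0) \<and> trace \<rho> = 1"

definition orth_proj :: "complex^'n^'n \<Rightarrow> bool" where
  "orth_proj P \<longleftrightarrow> P ** P = P \<and> hermitian_mat P"

definition mpow :: "complex^'n^'n \<Rightarrow> nat \<Rightarrow> complex^'n^'n" where
  "mpow A k = ((\<lambda>B. A ** B) ^^ k) (mat 1)"

definition mexp :: "complex^'n^'n \<Rightarrow> complex^'n^'n" where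
  "mexp A = (\<Sum>k. cscale (complex_of_real (1 / fact k)) (mpow A k))"

definition std_brownian_motion :: "'a measure \<Rightarrow> (real \<Rightarrow> 'a \<Rightarrow> real) \<Rightarrow> bool" where
  "std_brownian_motion M B \<longleftrightarrow>
     prob_space M \<and>
     (\<forall>t\<ge>0. B t \<in> borel_measurable M) \<and>
     (\<forall>\<omega>\<in>space M. B 0 \<omega> = 0) \<and>
     (\<forall>\<omega>\<in>space M. continuous_on {0..} (\<lambda>t. B t \<omega>)) \<and>
     (\<forall>s t. 0 \<le> s \<longrightarrow> s < t \<longrightarrow>
        distributed M lborel (\<lambda>\<omega>. B t \<omega> - B s \<omega>) (normal_density 0 (sqrt (t - s)))) \<and>
     (\<forall>(ts::nat \<Rightarrow> real) k. 0 \<le> ts 0 \<longrightarrow> (\<forall>i<k. ts i < ts (Suc i)) \<longrightarrow>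
        prob_space.indep_vars M (\<lambda>_. borel) (\<lambda>i \<omega>. B (ts (Suc i)) \<omega> - B (ts i) \<omega>) {..<k})"

definition gen_filtration :: "'a measure \<Rightarrow> (real \<Rightarrow> 'a \<Rightarrow> real) \<Rightarrow> real \<Rightarrow> 'a measure" where
  "gen_filtration M \<xi> t =
     sigma (space M) {\<xi> s -` A \<inter> space M | s A. s \<in> {0..t} \<and> A \<in> sets borel}"

end

theory Submission
  imports Defs
begin


lemma cscale_nth[simp]: "cscale c A $ i $ j = c * A $ i $ j"
  by (simp add: cscale_def)

lemma cscale_mult_left: "cscale z A ** B = cscale z (A ** B)"
  by (simp add: vec_eq_iff matrix_matrix_mult_def sum_distrib_left mult.assoc)

lemma cscale_mult_right: "A ** cscale z B = cscale z (A ** B)"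
  by (simp add: vec_eq_iff matrix_matrix_mult_def sum_distrib_left algebra_simps)

lemma cscale_cscale: "cscale a (cscale b A) = cscale (a*b) A"
  by (simp add: vec_eq_iff mult.assoc)

lemma cscale_sum: "cscale z (\<Sum>r\<in>S. A r) = (\<Sum>r\<in>S. cscale z (A r))"
  by (induction S rule: infinite_finite_induct) (auto simp: vec_eq_iff algebra_simps)

lemma cscale_add_scalar: "cscale (a+b) A = cscale a A + cscale b A"
  by (simp add: vec_eq_iff algebra_simps)

lemma cscale_diff_scalar: "cscale (a-b) A = cscale a A - cscale b A"
  by (simp add: vec_eq_iff algebra_simps)

lemma cscale_one[simp]: "cscale 1 A = A"
  by (simp add: vec_eq_iff)

lemma cscale_zero_mat[simp]: "cscale z 0 = 0"
  by (simp add: vec_eq_iff)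

lemma cscale_zero_scalar[simp]: "cscale 0 A = 0"
  by (simp add: vec_eq_iff)

lemma matrix_add_rdistrib': "((B + C) ** (A::complex^'n^'n)) = (B ** A) + (C ** A)"
  by (simp add: vec_eq_iff matrix_matrix_mult_def sum.distrib[symmetric] algebra_simps)

lemma sum_mult_left: "(\<Sum>r\<in>S. A r) ** (B::complex^'n^'n) = (\<Sum>r\<in>S. A r ** B)"
  by (induction S rule: infinite_finite_induct) (auto simp: matrix_add_rdistrib')

lemma sum_mult_right: "(B::complex^'n^'n) ** (\<Sum>r\<in>S. A r) = (\<Sum>r\<in>S. B ** A r)"
  by (induction S rule: infinite_finite_induct) (auto simp: matrix_add_ldistrib)

lemma trace_cscale: "trace (cscale z A) = z * trace A"
  by (simp add: trace_def sum_distrib_left)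

lemma trace_sum: "trace (\<Sum>r\<in>S. (A r::complex^'n^'n)) = (\<Sum>r\<in>S. trace (A r))"
  by (induction S rule: infinite_finite_induct) (auto simp: trace_def sum.distrib)

lemma adjoint_sum: "adjoint_mat (\<Sum>r\<in>S. A r) = (\<Sum>r\<in>S. adjoint_mat (A r))"
  by (induction S rule: infinite_finite_induct) (auto simp: adjoint_mat_def vec_eq_iff)

lemma adjoint_cscale: "adjoint_mat (cscale z A) = cscale (cnj z) (adjoint_mat A)"
  by (simp add: adjoint_mat_def vec_eq_iff)

lemma adjoint_mult: "adjoint_mat (A ** B) = adjoint_mat B ** adjoint_mat A"
  by (simp add: adjoint_mat_def vec_eq_iff matrix_matrix_mult_def mult.commute)

lemma adjoint_adjoint[simp]: "adjoint_mat (adjoint_mat A) = A"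
  by (simp add: adjoint_mat_def vec_eq_iff)

lemma trace_adjoint: "trace (adjoint_mat A) = cnj (trace A)"
  by (simp add: adjoint_mat_def trace_def)

locale spec =
  fixes D :: nat and P :: "nat \<Rightarrow> complex^'n^'n"
  assumes proj: "\<And>r. r \<in> {1..D} \<Longrightarrow> orth_proj (P r) \<and> P r \<noteq> 0"
    and orth: "\<And>r s. r \<in> {1..D} \<Longrightarrow> s \<in> {1..D} \<Longrightarrow> r \<noteq> s \<Longrightarrow> P r ** P s = 0"
    and complete: "(\<Sum>r=1..D. P r) = mat 1"
begin

lemma idem: "r \<in> {1..D} \<Longrightarrow> P r ** P r = P r"
  using proj by (auto simp: orth_proj_def)

lemma herm: "r \<in> {1..D} \<Longrightarrow> adjoint_mat (P r) = P r"
  using proj by (auto simp: orth_proj_def hermitian_mat_def)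

lemma diag_mult_right:
  assumes "s \<in> {1..D}"
  shows "(\<Sum>r=1..D. cscale (a r) (P r)) ** P s = cscale (a s) (P s)"
proof -
  have "(\<Sum>r=1..D. cscale (a r) (P r)) ** P s = (\<Sum>r=1..D. cscale (a r) (P r ** P s))"
    by (simp add: sum_mult_left cscale_mult_left)
  also have "\<dots> = cscale (a s) (P s ** P s)"
    by (subst sum.remove[of _ s]) (use assms orth in auto)
  finally show ?thesis using idem assms by simp
qed

lemma diag_mult:
  "(\<Sum>r=1..D. cscale (a r) (P r)) ** (\<Sum>r=1..D. cscale (b r) (P r)) = (\<Sum>r=1..D. cscale (a r * b r) (P r))"
proof -
  have "(\<Sum>r=1..D. cscale (a r) (P r)) ** (\<Sum>r=1..D. cscale (b r) (P r))
      = (\<Sum>s=1..D. cscale (b s) ((\<Sum>r=1..D. cscale (a r) (P r)) ** P s))"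
    by (simp add: sum_mult_right cscale_mult_right)
  also have "\<dots> = (\<Sum>s=1..D. cscale (a s * b s) (P s))"
    by (rule sum.cong) (simp, metis diag_mult_right cscale_cscale mult.commute)
  finally show ?thesis .
qed

lemma mpow_diag: "mpow (\<Sum>r=1..D. cscale (c r) (P r)) k = (\<Sum>r=1..D. cscale (c r ^ k) (P r))"
proof (induction k)
  case 0
  then show ?case using complete by (simp add: mpow_def)
next
  case (Suc k)
  have "mpow (\<Sum>r=1..D. cscale (c r) (P r)) (Suc k) = (\<Sum>r=1..D. cscale (c r) (P r)) ** mpow (\<Sum>r=1..D. cscale (c r) (P r)) k"
    by (simp add: mpow_def)
  also have "\<dots> = (\<Sum>r=1..D. cscale (c r) (P r)) ** (\<Sum>r=1..D. cscale (c r ^ k) (P r))"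
    using Suc.IH by simp
  also have "\<dots> = (\<Sum>r=1..D. cscale (c r * c r ^ k) (P r))" by (rule diag_mult)
  finally show ?case by simp
qed

lemma linear_cscale: "linear (\<lambda>z. cscale z A)"
proof (rule linearI)
  fix b1 b2 :: complex
  show "cscale (b1 + b2) A = cscale b1 A + cscale b2 A" by (rule cscale_add_scalar)
next
  fix r :: real and b :: complex
  show "cscale (r *\<^sub>R b) A = r *\<^sub>R cscale b A"
    apply (simp add: vec_eq_iff)
    done
qed

lemma mexp_diag: "mexp (\<Sum>r=1..D. cscale (c r) (P r)) = (\<Sum>r=1..D. cscale (exp (c r)) (P r))"
proof -
  have eq: "cscale (complex_of_real (1 / fact k)) (mpow (\<Sum>r=1..D. cscale (c r) (P r)) k)
        = (\<Sum>r=1..D. cscale (c r ^ k /\<^sub>R fact k) (P r))" for k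
  proof -
    have "cscale (complex_of_real (1 / fact k)) (mpow (\<Sum>r=1..D. cscale (c r) (P r)) k)
       = (\<Sum>r=1..D. cscale (complex_of_real (1 / fact k) * c r ^ k) (P r))"
      unfolding mpow_diag cscale_sum cscale_cscale ..
    also have "\<dots> = (\<Sum>r=1..D. cscale (c r ^ k /\<^sub>R fact k) (P r))"
      by (rule sum.cong) (simp_all add: scaleR_conv_of_real divide_inverse mult.commute del: of_real_divide)
    finally show ?thesis .
  qed
  have "(\<lambda>k. \<Sum>r=1..D. cscale (c r ^ k /\<^sub>R fact k) (P r)) sums (\<Sum>r=1..D. cscale (exp (c r)) (P r))"
  proof (rule sums_sum)
    fix r
    have bl: "bounded_linear (\<lambda>z. cscale z (P r))"
      using linear_cscale linear_conv_bounded_linear by blast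
    show "(\<lambda>k. cscale (c r ^ k /\<^sub>R fact k) (P r)) sums cscale (exp (c r)) (P r)"
      by (rule bounded_linear.sums[OF bl exp_converges])
  qed
  then show ?thesis unfolding mexp_def eq by (rule sums_unique[symmetric])
qed

end



lemma cinner_herm:
  assumes "adjoint_mat P = P"
  shows "cinner x (P *v y) = cinner (P *v x) y"
proof -
  have Pc: "cnj (P$b$a) = P$a$b" for a b
    using assms by (metis adjoint_mat_def vec_lambda_beta)
  have "cinner x (P *v y) = (\<Sum>a\<in>UNIV. \<Sum>b\<in>UNIV. cnj (x$a) * P$a$b * y$b)"
    by (simp add: cinner_def matrix_vector_mult_def sum_distrib_left mult.assoc)
  also have "\<dots> = (\<Sum>b\<in>UNIV. \<Sum>a\<in>UNIV. cnj (x$a) * P$a$b * y$b)"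
    by (rule sum.swap)
  also have "\<dots> = cinner (P *v x) y"
    by (simp add: cinner_def matrix_vector_mult_def sum_distrib_right sum_distrib_left Pc mult_ac)
  finally show ?thesis .
qed

lemma trace_real:
  assumes "hermitian_mat A" "hermitian_mat B"
  shows "trace (A ** B) = complex_of_real (Re (trace (A ** B)))"
proof -
  have "cnj (trace (A ** B)) = trace (A ** B)"
  proof -
    have "cnj (trace (A ** B)) = trace (adjoint_mat (A ** B))" by (simp only: trace_adjoint)
    also have "\<dots> = trace (B ** A)" using assms by (simp only: adjoint_mult hermitian_mat_def)
    also have "\<dots> = trace (A ** B)" by (rule trace_mul_sym)
    finally show ?thesis .
  qed
  then show ?thesis by (simp add: complex_eq_iff)
qed

lemma vec2_mult:
  fixes A :: "complex^'n^'n"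
  assumes "i \<noteq> j"
  shows "(A *v (\<chi> a. (if a = i then 1 else 0) + (if a = j then z else 0))) $ c = A$c$i + A$c$j * z"
proof -
  have e: "A$c$b * ((if b = i then 1 else 0) + (if b = j then z else 0)) = (if b = i then A$c$i else 0) + (if b = j then A$c$j * z else 0)" for b
    using assms by auto
  show ?thesis by (simp only: matrix_vector_mult_def vec_lambda_beta e sum.distrib sum.delta finite UNIV_I if_True)
qed

lemma vec2_cinner:
  assumes "i \<noteq> j"
  shows "cinner (\<chi> a. (if a = i then 1 else 0) + (if a = j then z else 0)) y = y$i + cnj z * y$j"
proof -
  have e: "cnj ((if b = i then 1 else 0) + (if b = j then z else 0)) * y$b = (if b = i then y$i else 0) + (if b = j then cnj z * y$j else 0)" for b
    using assms by auto
  show ?thesis by (simp only: cinner_def vec_lambda_beta e sum.distrib sum.delta finite UNIV_I if_True)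
qed

lemma psd_zero:
  fixes A :: "complex^'n^'n"
  assumes herm: "hermitian_mat A"
    and pos: "\<And>x. Re (cinner x (A *v x)) \<ge> 0"
    and diag0: "\<And>i. A$i$i = 0"
  shows "A = 0"
proof -
  have Ac: "A$j$i = cnj (A$i$j)" for i j
    using herm unfolding hermitian_mat_def adjoint_mat_def by (metis vec_lambda_beta)
  have "A$i$j = 0" for i j
  proof (cases "i = j")
    case True then show ?thesis using diag0 by simp
  next
    case False
    let ?z = "- cnj (A$i$j)"
    let ?x = "\<chi> a. (if a = i then 1 else 0) + (if a = j then ?z else 0)"
    have "cinner ?x (A *v ?x) = A$i$i + A$i$j * ?z + cnj ?z * (A$j$i + A$j$j * ?z)"
      using False by (simp add: vec2_cinner vec2_mult)
    also have "\<dots> = - 2 * complex_of_real ((cmod (A$i$j))\<^sup>2)"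
    proof -
      have "A$i$i + A$i$j * ?z + cnj ?z * (A$j$i + A$j$j * ?z) = - (A$i$j * cnj (A$i$j)) - (A$i$j * cnj (A$i$j))"
        by (simp only: diag0 Ac[of i j]) simp
      also have "\<dots> = - 2 * complex_of_real ((cmod (A$i$j))\<^sup>2)"
        by (simp only: complex_norm_square) simp
      finally show ?thesis .
    qed
    finally have "Re (cinner ?x (A *v ?x)) = - 2 * (cmod (A$i$j))\<^sup>2" by simp
    with pos[of ?x] have "cmod (A$i$j) = 0" by simp
    then show ?thesis by simp
  qed
  then show ?thesis by (simp add: vec_eq_iff)
qed

lemma proj_sandwich_zero:
  fixes \<rho>0 P :: "complex^'n^'n"
  assumes dens: "density_matrix \<rho>0" and P: "orth_proj P"
    and tr: "Re (trace (\<rho>0 ** P)) = 0"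
  shows "P ** \<rho>0 ** P = 0"
proof -
  let ?A = "P ** \<rho>0 ** P"
  have hP: "adjoint_mat P = P" and iP: "P ** P = P"
    using P by (auto simp: orth_proj_def hermitian_mat_def)
  have h\<rho>: "adjoint_mat \<rho>0 = \<rho>0" using dens by (simp add: density_matrix_def hermitian_mat_def)
  have hA: "hermitian_mat ?A"
    by (simp add: hermitian_mat_def adjoint_mult hP h\<rho> matrix_mul_assoc)
  have quad: "cinner x (?A *v x) = cinner (P *v x) (\<rho>0 *v (P *v x))" for x
    by (simp add: matrix_vector_mul_assoc[symmetric] cinner_herm[OF hP])
  have pos: "Re (cinner x (?A *v x)) \<ge> 0" and im: "Im (cinner x (?A *v x)) = 0" for x
    using dens unfolding quad density_matrix_def by auto
  have diag: "?A$i$i = cinner (axis i 1) (?A *v axis i 1)" for i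
  proof -
    have e: "cnj (axis i 1 $ b) * (?A *v axis i 1) $ b = (if b = i then ?A$i$i else 0)" for b
    proof -
      have "(?A *v axis i 1) $ b = ?A$b$i"
        by (simp add: matrix_vector_mult_def axis_def mult_delta_right sum.delta)
      then show ?thesis by (simp add: axis_def)
    qed
    show ?thesis by (simp only: cinner_def e sum.delta finite UNIV_I if_True)
  qed
  have trA: "trace ?A = trace (\<rho>0 ** P)"
    by (metis iP matrix_mul_assoc trace_mul_sym)
  have tr0: "trace (\<rho>0 ** P) = 0"
    using trace_real[of \<rho>0 P] dens P tr by (simp add: density_matrix_def orth_proj_def)
  have "(\<Sum>i\<in>UNIV. Re (?A$i$i)) = 0"
    using trA tr0 by (simp add: trace_def Re_sum[symmetric])
  moreover have "\<forall>i\<in>UNIV. Re (?A$i$i) \<ge> 0" using pos diag by simp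
  ultimately have "Re (?A$i$i) = 0" for i
    by (simp add: sum_nonneg_eq_0_iff)
  moreover have "Im (?A$i$i) = 0" for i using im diag by simp
  ultimately have "?A$i$i = 0" for i by (simp add: complex_eq_iff)
  then show ?thesis using psd_zero[OF hA pos] by blast
qed




context spec begin

lemma cscale_diag: "cscale z (\<Sum>r=1..D. cscale (e r) (P r)) = (\<Sum>r=1..D. cscale (z * e r) (P r))"
  by (simp only: cscale_sum cscale_cscale)

lemma diag_add: "(\<Sum>r=1..D. cscale (e r) (P r)) + (\<Sum>r=1..D. cscale (f r) (P r)) = (\<Sum>r=1..D. cscale (e r + f r) (P r))"
  by (simp only: sum.distrib[symmetric] cscale_add_scalar)

lemma diag_diff: "(\<Sum>r=1..D. cscale (e r) (P r)) - (\<Sum>r=1..D. cscale (f r) (P r)) = (\<Sum>r=1..D. cscale (e r - f r) (P r))"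
  by (simp only: sum_subtractf[symmetric] cscale_diff_scalar)

lemma diag_adjoint: "adjoint_mat (\<Sum>r=1..D. cscale (e r) (P r)) = (\<Sum>r=1..D. cscale (cnj (e r)) (P r))"
  by (simp only: adjoint_sum adjoint_cscale) (rule sum.cong, simp_all add: herm)

lemma sandwich:
  "(\<Sum>n=1..D. cscale (e n) (P n)) ** R ** (\<Sum>m=1..D. cscale (f m) (P m))
   = (\<Sum>n=1..D. \<Sum>m=1..D. cscale (e n * f m) (P n ** R ** P m))"
  by (simp only: sum_mult_left sum_mult_right cscale_mult_left cscale_mult_right cscale_sum cscale_cscale)
     (subst sum.swap, simp only: mult.commute)

lemma trace_PRP:
  assumes "n \<in> {1..D}" "m \<in> {1..D}"
  shows "trace (P n ** R ** P m) = (if n = m then trace (R ** P n) else 0)"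
proof -
  have "trace (P n ** R ** P m) = trace (P m ** (P n ** R))" by (rule trace_mul_sym)
  also have "\<dots> = trace ((P m ** P n) ** R)" by (simp only: matrix_mul_assoc)
  finally have e: "trace (P n ** R ** P m) = trace ((P m ** P n) ** R)" .
  show ?thesis
  proof (cases "n = m")
    case True
    then have "trace (P n ** R ** P m) = trace (P n ** R)" using e idem[OF assms(1)] by simp
    also have "\<dots> = trace (R ** P n)" by (rule trace_mul_sym)
    finally show ?thesis using True by simp
  next
    case False
    then show ?thesis using e orth[OF assms(2,1)] by (simp add: trace_def)
  qed
qed


lemma rho_algebra:
  fixes Hop \<rho>0 :: "complex^'n^'n" and E p c :: "nat \<Rightarrow> real" and hbar \<sigma> s x :: real
    and \<Phi> :: "nat \<Rightarrow> nat \<Rightarrow> real" and K :: "complex^'n^'n"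
  assumes spectral: "Hop = (\<Sum>r=1..D. cscale (complex_of_real (E r)) (P r))"
    and dens: "density_matrix \<rho>0"
    and p_def: "\<And>r. p r = Re (trace (\<rho>0 ** P r))"
    and pnn: "\<And>r. r \<in> {1..D} \<Longrightarrow> p r \<ge> 0"
    and K_def: "K = mexp (cscale (- \<i> * complex_of_real (s / hbar)) Hop
                     + cscale (complex_of_real (\<sigma> * x / 2)) Hop
                     - cscale (complex_of_real (\<sigma>\<^sup>2 * s / 4)) (Hop ** Hop))"
    and c_def: "\<And>n. n \<in> {1..D} \<Longrightarrow> p n > 0 \<Longrightarrow> c n = p n * exp (\<sigma> * E n * x - \<sigma>\<^sup>2 * (E n)\<^sup>2 * s / 2)
                  / (\<Sum>r=1..D. p r * exp (\<sigma> * E r * x - \<sigma>\<^sup>2 * (E r)\<^sup>2 * s / 2))"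
    and Phi_def: "\<And>n m. \<Phi> n m =
        exp (\<sigma> * (E n + E m) * x / 2 - \<sigma>\<^sup>2 * (E n + E m)\<^sup>2 * s / 8)
        / (\<Sum>r=1..D. p r * exp (\<sigma> * E r * x - \<sigma>\<^sup>2 * (E r)\<^sup>2 * s / 2))
        * exp (- \<sigma>\<^sup>2 * (E n - E m)\<^sup>2 * s / 8)"
  shows "cscale (1 / trace (K ** \<rho>0 ** adjoint_mat K)) (K ** \<rho>0 ** adjoint_mat K) =
     (\<Sum>n\<in>{n\<in>{1..D}. p n > 0}.
        cscale (complex_of_real (c n) / trace (\<rho>0 ** P n)) (P n ** \<rho>0 ** P n))
   + (\<Sum>n=1..D. \<Sum>m\<in>{1..D} - {n}.
        cscale (exp (- \<i> * complex_of_real ((E n - E m) * s / hbar)) * complex_of_real (\<Phi> n m))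
          (P n ** \<rho>0 ** P m))"
proof -
  define Z where "Z = (\<Sum>r=1..D. p r * exp (\<sigma> * E r * x - \<sigma>\<^sup>2 * (E r)\<^sup>2 * s / 2))"
  define a where "a r = - \<i> * complex_of_real (s / hbar) * complex_of_real (E r)
     + complex_of_real (\<sigma> * x / 2) * complex_of_real (E r)
     - complex_of_real (\<sigma>\<^sup>2 * s / 4) * (complex_of_real (E r) * complex_of_real (E r))" for r
  have hr\<rho>: "hermitian_mat \<rho>0" using dens by (simp add: density_matrix_def)
  have trp: "trace (\<rho>0 ** P r) = complex_of_real (p r)" if "r \<in> {1..D}" for r
    using trace_real[OF hr\<rho>, of "P r"] proj[OF that] p_def by (simp add: orth_proj_def)
  have HH: "Hop ** Hop = (\<Sum>r=1..D. cscale (complex_of_real (E r) * complex_of_real (E r)) (P r))"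
    unfolding spectral by (rule diag_mult)
  have arg: "cscale (- \<i> * complex_of_real (s / hbar)) Hop
                     + cscale (complex_of_real (\<sigma> * x / 2)) Hop
                     - cscale (complex_of_real (\<sigma>\<^sup>2 * s / 4)) (Hop ** Hop)
           = (\<Sum>r=1..D. cscale (a r) (P r))"
    unfolding HH unfolding spectral cscale_diag diag_add diag_diff a_def ..
  have K: "K = (\<Sum>r=1..D. cscale (exp (a r)) (P r))"
    unfolding K_def arg by (rule mexp_diag)
  have KK: "K ** \<rho>0 ** adjoint_mat K = (\<Sum>n=1..D. \<Sum>m=1..D. cscale (exp (a n) * cnj (exp (a m))) (P n ** \<rho>0 ** P m))"
    unfolding K diag_adjoint by (rule sandwich)
  have ea: "exp (a n) * cnj (exp (a m)) = exp (- \<i> * complex_of_real ((E n - E m) * s / hbar))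
      * complex_of_real (exp (\<sigma> * (E n + E m) * x / 2 - \<sigma>\<^sup>2 * ((E n)\<^sup>2 + (E m)\<^sup>2) * s / 4))" for n m
  proof -
    have "a n + cnj (a m) = - \<i> * complex_of_real ((E n - E m) * s / hbar)
      + complex_of_real (\<sigma> * (E n + E m) * x / 2 - \<sigma>\<^sup>2 * ((E n)\<^sup>2 + (E m)\<^sup>2) * s / 4)"
      by (cases "hbar = 0") (simp_all add: a_def complex_eq_iff power2_eq_square field_simps)
    moreover have "exp (a n) * cnj (exp (a m)) = exp (a n + cnj (a m))"
      by (simp add: exp_add exp_cnj)
    ultimately show ?thesis
      by (simp only: exp_add exp_of_real)
  qed
  have ean: "exp (a n) * cnj (exp (a n)) = complex_of_real (exp (\<sigma> * E n * x - \<sigma>\<^sup>2 * (E n)\<^sup>2 * s / 2))" for n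
    using ea[of n n] by (simp add: power2_eq_square field_simps)
  have tr: "trace (K ** \<rho>0 ** adjoint_mat K) = complex_of_real Z"
  proof -
    have "trace (K ** \<rho>0 ** adjoint_mat K) = (\<Sum>n=1..D. \<Sum>m=1..D. exp (a n) * cnj (exp (a m)) * trace (P n ** \<rho>0 ** P m))"
      unfolding KK by (simp only: trace_sum trace_cscale)
    also have "\<dots> = (\<Sum>n=1..D. exp (a n) * cnj (exp (a n)) * trace (\<rho>0 ** P n))"
    proof (rule sum.cong[OF refl])
      fix n assume n: "n \<in> {1..D}"
      have "(\<Sum>m=1..D. exp (a n) * cnj (exp (a m)) * trace (P n ** \<rho>0 ** P m))
          = (\<Sum>m=1..D. if m = n then exp (a n) * cnj (exp (a n)) * trace (\<rho>0 ** P n) else 0)"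
        by (rule sum.cong[OF refl]) (use n trace_PRP in auto)
      also have "\<dots> = exp (a n) * cnj (exp (a n)) * trace (\<rho>0 ** P n)"
        using n by (simp add: sum.delta)
      finally show "(\<Sum>m=1..D. exp (a n) * cnj (exp (a m)) * trace (P n ** \<rho>0 ** P m)) = exp (a n) * cnj (exp (a n)) * trace (\<rho>0 ** P n)" .
    qed
    also have "\<dots> = (\<Sum>n=1..D. complex_of_real (p n * exp (\<sigma> * E n * x - \<sigma>\<^sup>2 * (E n)\<^sup>2 * s / 2)))"
      by (rule sum.cong[OF refl]) (simp add: ean trp mult.commute)
    also have "\<dots> = complex_of_real Z" by (simp add: Z_def)
    finally show ?thesis .
  qed
  define F where "F n m = cscale (exp (a n) * cnj (exp (a m)) / complex_of_real Z) (P n ** \<rho>0 ** P m)" for n m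
  have lhs: "cscale (1 / trace (K ** \<rho>0 ** adjoint_mat K)) (K ** \<rho>0 ** adjoint_mat K)
     = (\<Sum>n=1..D. \<Sum>m=1..D. F n m)"
    unfolding tr unfolding KK F_def by (simp only: cscale_sum cscale_cscale) (simp add: field_simps)
  also have "\<dots> = (\<Sum>n=1..D. F n n + (\<Sum>m\<in>{1..D} - {n}. F n m))"
    by (rule sum.cong[OF refl]) (simp add: sum.remove)
  also have "\<dots> = (\<Sum>n=1..D. F n n) + (\<Sum>n=1..D. \<Sum>m\<in>{1..D} - {n}. F n m)"
    by (simp only: sum.distrib)
  finally have L: "cscale (1 / trace (K ** \<rho>0 ** adjoint_mat K)) (K ** \<rho>0 ** adjoint_mat K)
      = (\<Sum>n=1..D. F n n) + (\<Sum>n=1..D. \<Sum>m\<in>{1..D} - {n}. F n m)" .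
  have diag: "(\<Sum>n=1..D. F n n) = (\<Sum>n\<in>{n\<in>{1..D}. p n > 0}.
        cscale (complex_of_real (c n) / trace (\<rho>0 ** P n)) (P n ** \<rho>0 ** P n))"
  proof -
    have "(\<Sum>n=1..D. F n n) = (\<Sum>n\<in>{n\<in>{1..D}. p n > 0}. F n n)"
    proof (rule sum.mono_neutral_right)
      show "\<forall>i\<in>{1..D} - {n \<in> {1..D}. 0 < p n}. F i i = 0"
      proof
        fix i assume i: "i \<in> {1..D} - {n \<in> {1..D}. 0 < p n}"
        then have "p i = 0" using pnn[of i] by auto
        then have "P i ** \<rho>0 ** P i = 0"
          using proj_sandwich_zero[OF dens, of "P i"] proj[of i] i p_def[of i] by auto
        then show "F i i = 0" by (simp add: F_def)
      qed
    qed auto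
    also have "\<dots> = (\<Sum>n\<in>{n\<in>{1..D}. p n > 0}.
        cscale (complex_of_real (c n) / trace (\<rho>0 ** P n)) (P n ** \<rho>0 ** P n))"
    proof (rule sum.cong[OF refl])
      fix n assume n: "n \<in> {n\<in>{1..D}. p n > 0}"
      have "exp (a n) * cnj (exp (a n)) / complex_of_real Z = complex_of_real (c n) / trace (\<rho>0 ** P n)"
        using n by (simp add: ean trp c_def Z_def)
      then show "F n n = cscale (complex_of_real (c n) / trace (\<rho>0 ** P n)) (P n ** \<rho>0 ** P n)"
        by (simp add: F_def)
    qed
    finally show ?thesis .
  qed
  have off: "F n m = cscale (exp (- \<i> * complex_of_real ((E n - E m) * s / hbar)) * complex_of_real (\<Phi> n m))
          (P n ** \<rho>0 ** P m)" for n m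
  proof -
    have "exp (\<sigma> * (E n + E m) * x / 2 - \<sigma>\<^sup>2 * (E n + E m)\<^sup>2 * s / 8) * exp (- \<sigma>\<^sup>2 * (E n - E m)\<^sup>2 * s / 8)
        = exp (\<sigma> * (E n + E m) * x / 2 - \<sigma>\<^sup>2 * ((E n)\<^sup>2 + (E m)\<^sup>2) * s / 4)"
      by (simp add: exp_add[symmetric] power2_eq_square field_simps)
    then have "\<Phi> n m = exp (\<sigma> * (E n + E m) * x / 2 - \<sigma>\<^sup>2 * ((E n)\<^sup>2 + (E m)\<^sup>2) * s / 4) / Z"
      by (simp add: Phi_def Z_def)
    then show ?thesis by (simp add: F_def ea)
  qed
  show ?thesis unfolding L diag unfolding off ..
qed

end




lemma normal_shift:
  assumes "\<delta> > 0"
  shows "ennreal (normal_density 0 (sqrt \<delta>) x) * ennreal (exp (c * x - c\<^sup>2 * \<delta> / 2))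
       = ennreal (normal_density (c * \<delta>) (sqrt \<delta>) x)"
proof -
  have "normal_density 0 (sqrt \<delta>) x * exp (c * x - c\<^sup>2 * \<delta> / 2) = normal_density (c * \<delta>) (sqrt \<delta>) x"
  proof -
    have "- (x - 0)\<^sup>2 / (2 * (sqrt \<delta>)\<^sup>2) + (c * x - c\<^sup>2 * \<delta> / 2) = - (x - c * \<delta>)\<^sup>2 / (2 * (sqrt \<delta>)\<^sup>2)"
      using assms by (simp add: field_simps power2_eq_square)
    then show ?thesis
      unfolding normal_density_def by (simp only: mult.assoc exp_add[symmetric])
  qed
  then show ?thesis by (simp add: ennreal_mult'[symmetric])
qed

lemma indicator_PiE_prod:
  assumes "y \<in> extensional I" "finite I"
  shows "indicator (Pi\<^sub>E I A) y = (\<Prod>i\<in>I. indicator (A i) (y i) :: ennreal)"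
  using assms by (auto simp: indicator_def PiE_def Pi_def prod.neutral intro: prod_zero)

lemma sum_comp_meas: "(m::nat) \<le> k \<Longrightarrow> (\<lambda>y. sum y {..<m}) \<in> borel_measurable (Pi\<^sub>M {..<k} (\<lambda>_. (borel::real measure)))"
  by measurable

lemma distr_lborel_borel: "distr M lborel X = distr M borel X"
  by (rule distr_cong) auto


lemma CM_pos:
  fixes B :: "real \<Rightarrow> 'a \<Rightarrow> real" and G :: "(real \<Rightarrow> real) \<Rightarrow> ennreal"
  assumes BM: "std_brownian_motion M B"
    and J: "finite J" "J \<subseteq> {0..T}" "T \<in> J" and T: "T > 0"
    and G[measurable]: "G \<in> borel_measurable (Pi\<^sub>M J (\<lambda>_. borel))"
  shows "(\<integral>\<^sup>+\<omega>. G (\<lambda>j\<in>J. B j \<omega> + c * j) \<partial>M)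
       = (\<integral>\<^sup>+\<omega>. G (\<lambda>j\<in>J. B j \<omega>) * ennreal (exp (c * B T \<omega> - c\<^sup>2 * T / 2)) \<partial>M)"
proof -
  interpret prob_space M using BM by (simp add: std_brownian_motion_def)
  have Bm[measurable]: "\<And>t. t \<ge> 0 \<Longrightarrow> B t \<in> borel_measurable M"
    and B0: "\<And>\<omega>. \<omega> \<in> space M \<Longrightarrow> B 0 \<omega> = 0"
    and inc: "\<And>s t. 0 \<le> s \<Longrightarrow> s < t \<Longrightarrow>
        distributed M lborel (\<lambda>\<omega>. B t \<omega> - B s \<omega>) (normal_density 0 (sqrt (t - s)))"
    and ind: "\<And>(ts::nat \<Rightarrow> real) k. 0 \<le> ts 0 \<Longrightarrow> (\<forall>i<k. ts i < ts (Suc i)) \<Longrightarrow>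
        indep_vars (\<lambda>_. borel) (\<lambda>i \<omega>. B (ts (Suc i)) \<omega> - B (ts i) \<omega>) {..<k}"
    using BM unfolding std_brownian_motion_def by auto
  define L where "L = sorted_list_of_set (insert 0 J)"
  define k where "k = length L - 1"
  have setL: "set L = insert 0 J" unfolding L_def using J by (intro set_sorted_list_of_set) simp
  have sortL: "sorted_wrt (<) L" by (simp add: L_def strict_sorted_list_of_set)
  have lenL: "length L = card (insert 0 J)" by (simp add: L_def)
  have "card {0, T} \<le> card (insert 0 J)" using J by (intro card_mono) auto
  then have card2: "2 \<le> card (insert 0 J)" using T by simp
  then have lenk: "length L = Suc k" and k1: "k \<ge> 1" using lenL by (auto simp: k_def)
  define s where "s i = L ! (min i k)" for i
  have s_mono: "s i < s j" if "i < j" "j \<le> k" for i j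
    using sorted_wrt_nth_less[OF sortL, of i j] that lenk by (simp add: s_def)
  have s_range: "s i \<in> insert 0 J" for i
    unfolding s_def setL[symmetric] using lenk by (intro nth_mem) auto
  have sJ: "s i \<in> {0..T}" for i using s_range[of i] J T by fastforce
  then have s_nn: "0 \<le> s i" and s_le: "s i \<le> T" for i by auto
  have s_surj: "\<exists>m\<le>k. s m = j" if "j \<in> insert 0 J" for j
  proof -
    from that setL obtain m where "m < length L" "L ! m = j" by (metis in_set_conv_nth)
    then show ?thesis using lenk by (intro exI[of _ m]) (auto simp: s_def)
  qed
  have s0: "s 0 = 0"
  proof -
    obtain m where m: "m \<le> k" "s m = 0" using s_surj[of 0] by auto
    show ?thesis
    proof (cases "m = 0")
      case False then have "s 0 < s m" using m by (intro s_mono) auto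
      then show ?thesis using m s_nn[of 0] by simp
    qed (use m in simp)
  qed
  have sk: "s k = T"
  proof -
    obtain m where m: "m \<le> k" "s m = T" using s_surj[of T] J by auto
    show ?thesis
    proof (cases "m = k")
      case False then have "s m < s k" using m by (intro s_mono) auto
      then show ?thesis using m s_le[of k] by simp
    qed (use m in simp)
  qed
  define idx where "idx j = (SOME m. m \<le> k \<and> s m = j)" for j
  have idx: "idx j \<le> k \<and> s (idx j) = j" if "j \<in> J" for j
    unfolding idx_def by (rule someI_ex) (use s_surj that in auto)
  define \<delta> where "\<delta> i = s (Suc i) - s i" for i
  define X where "X i \<omega> = B (s (Suc i)) \<omega> - B (s i) \<omega>" for i \<omega>
  have \<delta>pos: "\<delta> i > 0" if "i < k" for i using s_mono[of i "Suc i"] that by (simp add: \<delta>_def)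
  have Xm[measurable]: "X i \<in> borel_measurable M" for i
    unfolding X_def using s_nn by measurable
  have tele: "B (s m) \<omega> = (\<Sum>i<m. X i \<omega>)" if "\<omega> \<in> space M" for m \<omega>
    using sum_lessThan_telescope[of "\<lambda>i. B (s i) \<omega>" m] B0[OF that] s0 by (simp add: X_def)
  have teled: "s m = (\<Sum>i<m. \<delta> i)" for m
    using sum_lessThan_telescope[of s m] s0 by (simp add: \<delta>_def)
  define R where "R y = (\<lambda>j\<in>J. \<Sum>i<idx j. y i)" for y :: "nat \<Rightarrow> real"
  have Rm[measurable]: "R \<in> measurable (Pi\<^sub>M {..<k} (\<lambda>_. borel)) (Pi\<^sub>M J (\<lambda>_. borel))"
    unfolding R_def
  proof (rule measurable_restrict)
    fix j assume j: "j \<in> J"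
    show "(\<lambda>y::nat\<Rightarrow>real. \<Sum>i<idx j. y i) \<in> borel_measurable (Pi\<^sub>M {..<k} (\<lambda>_. borel))"
      by (rule sum_comp_meas) (use idx[OF j] in auto)
  qed
  define Q where "Q y = G (R y)" for y
  have Qm[measurable]: "Q \<in> borel_measurable (Pi\<^sub>M {..<k} (\<lambda>_. borel))"
    unfolding Q_def by measurable
  define V where "V \<omega> = (\<lambda>i\<in>{..<k}. X i \<omega>)" for \<omega>
  define V' where "V' \<omega> = (\<lambda>i\<in>{..<k}. X i \<omega> + c * \<delta> i)" for \<omega>
  have Vm[measurable]: "V \<in> measurable M (Pi\<^sub>M {..<k} (\<lambda>_. borel))"
    unfolding V_def by (rule measurable_restrict) simp
  have V'm[measurable]: "V' \<in> measurable M (Pi\<^sub>M {..<k} (\<lambda>_. borel))"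
    unfolding V'_def by (rule measurable_restrict) simp
  have RV: "(\<lambda>j\<in>J. B j \<omega>) = R (V \<omega>)" if "\<omega> \<in> space M" for \<omega>
  proof
    fix j show "(\<lambda>j\<in>J. B j \<omega>) j = R (V \<omega>) j"
    proof (cases "j \<in> J")
      case True
      then have "B j \<omega> = (\<Sum>i<idx j. X i \<omega>)" using tele[OF that, of "idx j"] idx[OF True] by simp
      also have "\<dots> = (\<Sum>i<idx j. V \<omega> i)" using idx[OF True] by (intro sum.cong) (auto simp: V_def)
      finally show ?thesis using True by (simp add: R_def)
    qed (simp add: R_def)
  qed
  have RV': "(\<lambda>j\<in>J. B j \<omega> + c * j) = R (V' \<omega>)" if "\<omega> \<in> space M" for \<omega>
  proof
    fix j show "(\<lambda>j\<in>J. B j \<omega> + c * j) j = R (V' \<omega>) j"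
    proof (cases "j \<in> J")
      case True
      then have "B j \<omega> + c * j = (\<Sum>i<idx j. X i \<omega>) + c * (\<Sum>i<idx j. \<delta> i)"
        using tele[OF that, of "idx j"] teled[of "idx j"] idx[OF True] by simp
      also have "\<dots> = (\<Sum>i<idx j. V' \<omega> i)" using idx[OF True]
        by (simp add: sum_distrib_left sum.distrib[symmetric]) (intro sum.cong, auto simp: V'_def)
      finally show ?thesis using True by (simp add: R_def)
    qed (simp add: R_def)
  qed
  define e where "e i x = ennreal (exp (c * x - c\<^sup>2 * \<delta> i / 2))" for i x
  define Ep where "Ep y = (\<Prod>i<k. e i (y i))" for y
  have Epm[measurable]: "Ep \<in> borel_measurable (Pi\<^sub>M {..<k} (\<lambda>_. borel))"
    unfolding Ep_def e_def by measurable
  have expP: "ennreal (exp (c * B T \<omega> - c\<^sup>2 * T / 2)) = Ep (V \<omega>)" if "\<omega> \<in> space M" for \<omega>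
  proof -
    have "c * B T \<omega> - c\<^sup>2 * T / 2 = (\<Sum>i<k. c * X i \<omega> - c\<^sup>2 * \<delta> i / 2)"
      using tele[OF that, of k] teled[of k] sk
      by (simp add: sum_subtractf sum_distrib_left sum_divide_distrib)
    then have "exp (c * B T \<omega> - c\<^sup>2 * T / 2) = (\<Prod>i<k. exp (c * X i \<omega> - c\<^sup>2 * \<delta> i / 2))"
      by (simp add: exp_sum)
    then show ?thesis
      by (simp add: Ep_def e_def V_def prod_ennreal)
  qed
  define N0 where "N0 i = distr M borel (X i)" for i
  define Nc where "Nc i = distr M borel (\<lambda>\<omega>. X i \<omega> + c * \<delta> i)" for i
  have indX: "indep_vars (\<lambda>_. borel) X {..<k}"
    using ind[of s k] s0 s_mono unfolding X_def by auto
  have indX': "indep_vars (\<lambda>_. borel) (\<lambda>i \<omega>. X i \<omega> + c * \<delta> i) {..<k}"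
    using indep_vars_compose2[OF indX, of "\<lambda>i x. x + c * \<delta> i" "\<lambda>_. borel"] by simp
  have kne: "{..<k} \<noteq> {}" using k1 by (metis lessThan_iff less_one lessThan_empty_iff not_one_le_zero le0 less_le_trans)
  have dV: "distr M (Pi\<^sub>M {..<k} (\<lambda>_. borel)) V = Pi\<^sub>M {..<k} N0"
    using indep_vars_iff_distr_eq_PiM[OF kne, where M'="\<lambda>_. borel" and X=X] indX
    unfolding V_def N0_def by simp
  have dV': "distr M (Pi\<^sub>M {..<k} (\<lambda>_. borel)) V' = Pi\<^sub>M {..<k} Nc"
    using indep_vars_iff_distr_eq_PiM[OF kne, where M'="\<lambda>_. borel" and X="\<lambda>i \<omega>. X i \<omega> + c * \<delta> i"] indX'
    unfolding V'_def Nc_def by simp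
  have N0d: "N0 i = density lborel (normal_density 0 (sqrt (\<delta> i)))" if "i < k" for i
    using inc[of "s i" "s (Suc i)"] s_nn s_mono[of i "Suc i"] that
    unfolding N0_def distr_lborel_borel[symmetric] distributed_def X_def \<delta>_def by auto
  have Ncd: "Nc i = density lborel (normal_density (c * \<delta> i) (sqrt (\<delta> i)))" if "i < k" for i
  proof -
    have "distributed M lborel (X i) (normal_density 0 (sqrt (\<delta> i)))"
      using inc[of "s i" "s (Suc i)"] s_nn s_mono[of i "Suc i"] that
      unfolding X_def \<delta>_def by auto
    from normal_density_affine[OF this, of 1 "c * \<delta> i"] \<delta>pos[OF that]
    have "distributed M lborel (\<lambda>\<omega>. X i \<omega> + c * \<delta> i) (normal_density (c * \<delta> i) (sqrt (\<delta> i)))"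
      by (simp add: add.commute)
    then show ?thesis unfolding Nc_def distr_lborel_borel[symmetric] distributed_def by auto
  qed
  interpret N0: product_prob_space N0 "{..<k}"
    unfolding N0_def by (intro product_prob_spaceI prob_space_distr) simp
  interpret Nc: product_prob_space Nc "{..<k}"
    unfolding Nc_def by (intro product_prob_spaceI prob_space_distr) simp
  have sN0[simp]: "sets (N0 i) = sets borel" for i by (simp add: N0_def)
  have sNc[simp]: "sets (Nc i) = sets borel" for i by (simp add: Nc_def)
  have sP0: "sets (Pi\<^sub>M {..<k} N0) = sets (Pi\<^sub>M {..<k} (\<lambda>_. borel))"
    by (rule sets_PiM_cong) auto
  have sPc: "sets (Pi\<^sub>M {..<k} Nc) = sets (Pi\<^sub>M {..<k} (\<lambda>_. borel))"
    by (rule sets_PiM_cong) auto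
  have Epm0[measurable]: "Ep \<in> borel_measurable (Pi\<^sub>M {..<k} N0)"
    using Epm measurable_cong_sets[OF sP0 refl] by blast
  have key: "density (Pi\<^sub>M {..<k} N0) Ep = Pi\<^sub>M {..<k} Nc"
  proof (rule Nc.PiM_eqI)
    show "finite {..<k}" by simp
    show "sets (density (Pi\<^sub>M {..<k} N0) Ep) = sets (Pi\<^sub>M {..<k} Nc)"
      using sP0 sPc by simp
  next
    fix A assume A: "\<And>i. i \<in> {..<k} \<Longrightarrow> A i \<in> sets (Nc i)"
    have A': "A i \<in> sets borel" if "i < k" for i using A[of i] that by simp
    have em: "Pi\<^sub>E {..<k} A \<in> sets (Pi\<^sub>M {..<k} N0)"
      using A' by (intro sets_PiM_I_finite) auto
    have "emeasure (density (Pi\<^sub>M {..<k} N0) Ep) (Pi\<^sub>E {..<k} A)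
        = (\<integral>\<^sup>+ y. Ep y * indicator (Pi\<^sub>E {..<k} A) y \<partial>Pi\<^sub>M {..<k} N0)"
      by (rule emeasure_density[OF Epm0 em])
    also have "\<dots> = (\<integral>\<^sup>+ y. (\<Prod>i\<in>{..<k}. e i (y i) * indicator (A i) (y i)) \<partial>Pi\<^sub>M {..<k} N0)"
    proof (rule nn_integral_cong)
      fix y assume "y \<in> space (Pi\<^sub>M {..<k} N0)"
      then have "y \<in> extensional {..<k}" by (simp add: space_PiM PiE_def)
      then show "Ep y * indicator (Pi\<^sub>E {..<k} A) y = (\<Prod>i\<in>{..<k}. e i (y i) * indicator (A i) (y i))"
        by (simp add: indicator_PiE_prod Ep_def prod.distrib)
    qed
    also have "\<dots> = (\<Prod>i\<in>{..<k}. \<integral>\<^sup>+ x. e i x * indicator (A i) x \<partial>N0 i)"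
    proof (rule N0.product_nn_integral_prod)
      fix i assume "i \<in> {..<k}"
      then have [measurable]: "A i \<in> sets borel" using A' by auto
      show "(\<lambda>x. e i x * indicator (A i) x) \<in> borel_measurable (N0 i)"
        unfolding measurable_cong_sets[OF sN0 refl] e_def by measurable
    qed simp
    also have "\<dots> = (\<Prod>i\<in>{..<k}. emeasure (Nc i) (A i))"
    proof (rule prod.cong[OF refl])
      fix i assume i: "i \<in> {..<k}"
      have n0: "N0 i = density lborel (normal_density 0 (sqrt (\<delta> i)))" using i N0d by auto
      have nc: "Nc i = density lborel (normal_density (c * \<delta> i) (sqrt (\<delta> i)))" using i Ncd by auto
      have "(\<integral>\<^sup>+ x. e i x * indicator (A i) x \<partial>N0 i)
          = (\<integral>\<^sup>+ x. ennreal (normal_density 0 (sqrt (\<delta> i)) x) * (e i x * indicator (A i) x) \<partial>lborel)"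
        unfolding n0 using i A' by (subst nn_integral_density) (auto simp: e_def)
      also have "\<dots> = (\<integral>\<^sup>+ x. ennreal (normal_density (c * \<delta> i) (sqrt (\<delta> i)) x) * indicator (A i) x \<partial>lborel)"
        using normal_shift[OF \<delta>pos, of i] i by (intro nn_integral_cong) (simp add: e_def mult.assoc[symmetric])
      also have "\<dots> = emeasure (Nc i) (A i)"
        unfolding nc using i A' by (subst emeasure_density) (auto simp: mult.commute)
      finally show "(\<integral>\<^sup>+ x. e i x * indicator (A i) x \<partial>N0 i) = emeasure (Nc i) (A i)" .
    qed
    finally show "emeasure (density (Pi\<^sub>M {..<k} N0) Ep) (Pi\<^sub>E {..<k} A) = (\<Prod>i\<in>{..<k}. emeasure (Nc i) (A i))" .
  qed
  have "(\<integral>\<^sup>+\<omega>. G (\<lambda>j\<in>J. B j \<omega> + c * j) \<partial>M) = (\<integral>\<^sup>+\<omega>. Q (V' \<omega>) \<partial>M)"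
    by (intro nn_integral_cong) (simp add: RV' Q_def)
  also have "\<dots> = (\<integral>\<^sup>+y. Q y \<partial>distr M (Pi\<^sub>M {..<k} (\<lambda>_. borel)) V')"
    by (rule nn_integral_distr[symmetric]) simp_all
  also have "\<dots> = (\<integral>\<^sup>+y. Q y \<partial>density (Pi\<^sub>M {..<k} N0) Ep)"
    unfolding dV' key ..
  also have "\<dots> = (\<integral>\<^sup>+y. Ep y * Q y \<partial>Pi\<^sub>M {..<k} N0)"
    by (rule nn_integral_density[OF Epm0]) (simp only: measurable_cong_sets[OF sP0 refl] Qm)
  also have "\<dots> = (\<integral>\<^sup>+y. Q y * Ep y \<partial>distr M (Pi\<^sub>M {..<k} (\<lambda>_. borel)) V)"
    unfolding dV by (simp add: mult.commute)
  also have "\<dots> = (\<integral>\<^sup>+\<omega>. Q (V \<omega>) * Ep (V \<omega>) \<partial>M)"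
    by (rule nn_integral_distr) simp_all
  also have "\<dots> = (\<integral>\<^sup>+\<omega>. G (\<lambda>j\<in>J. B j \<omega>) * ennreal (exp (c * B T \<omega> - c\<^sup>2 * T / 2)) \<partial>M)"
    by (intro nn_integral_cong) (simp add: RV Q_def expP)
  finally show ?thesis .
qed



lemma CM:
  fixes B :: "real \<Rightarrow> 'a \<Rightarrow> real" and G :: "(real \<Rightarrow> real) \<Rightarrow> ennreal"
  assumes BM: "std_brownian_motion M B"
    and J: "finite J" "J \<subseteq> {0..T}" "T \<in> J"
    and G[measurable]: "G \<in> borel_measurable (Pi\<^sub>M J (\<lambda>_. borel))"
  shows "(\<integral>\<^sup>+\<omega>. G (\<lambda>j\<in>J. B j \<omega> + c * j) \<partial>M)
       = (\<integral>\<^sup>+\<omega>. G (\<lambda>j\<in>J. B j \<omega>) * ennreal (exp (c * B T \<omega> - c\<^sup>2 * T / 2)) \<partial>M)"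
proof (cases "T > 0")
  case True then show ?thesis using CM_pos[OF assms(1-4) True G] by simp
next
  case False
  then have T0: "T = 0" using J by auto
  then have J0: "J = {0}" using J by auto
  have B0: "\<And>\<omega>. \<omega> \<in> space M \<Longrightarrow> B 0 \<omega> = 0"
    using BM unfolding std_brownian_motion_def by auto
  show ?thesis
  proof (rule nn_integral_cong)
    fix \<omega> assume "\<omega> \<in> space M"
    then show "G (\<lambda>j\<in>J. B j \<omega> + c * j) = G (\<lambda>j\<in>J. B j \<omega>) * ennreal (exp (c * B T \<omega> - c\<^sup>2 * T / 2))"
      using B0 T0 J0 by (simp cong: restrict_cong)
  qed
qed

lemma indep_fun:
  assumes PS: "prob_space M" and sub: "subalgebra M N"
    and ind: "prob_space.indep_set M SA (sets N)"
    and C: "C \<in> SA" "C \<in> sets M"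
    and g: "g \<in> borel_measurable N"
  shows "(\<integral>\<^sup>+\<omega>. indicator C \<omega> * g \<omega> \<partial>M) = emeasure M C * (\<integral>\<^sup>+\<omega>. g \<omega> \<partial>M)"
  using g
proof (induction rule: borel_measurable_induct)
  case (cong f g)
  have "\<And>x. x \<in> space M \<Longrightarrow> f x = g x" using cong sub by (simp add: subalgebra_def)
  then have "(\<integral>\<^sup>+\<omega>. indicator C \<omega> * f \<omega> \<partial>M) = (\<integral>\<^sup>+\<omega>. indicator C \<omega> * g \<omega> \<partial>M)"
    and "(\<integral>\<^sup>+\<omega>. f \<omega> \<partial>M) = (\<integral>\<^sup>+\<omega>. g \<omega> \<partial>M)" by (auto intro!: nn_integral_cong)
  then show ?case using cong by simp
next
  case (set A)
  interpret prob_space M by fact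
  have AM: "A \<in> sets M" using set sub by (auto simp: subalgebra_def)
  have "(\<integral>\<^sup>+\<omega>. indicator C \<omega> * indicator A \<omega> \<partial>M) = emeasure M (C \<inter> A)"
  proof -
    have "(\<integral>\<^sup>+\<omega>. indicator C \<omega> * indicator A \<omega> \<partial>M) = (\<integral>\<^sup>+\<omega>. indicator (C \<inter> A) \<omega> \<partial>M)"
      by (intro nn_integral_cong) (simp add: indicator_def)
    also have "\<dots> = emeasure M (C \<inter> A)" using AM C by (intro nn_integral_indicator) auto
    finally show ?thesis .
  qed
  also have "\<dots> = emeasure M C * emeasure M A"
    using indep_setD[OF ind C(1) set] AM C
    by (simp add: emeasure_eq_measure sets.Int ennreal_mult)
  finally show ?case using AM by simp
next
  case (mult u c)
  have um: "u \<in> borel_measurable M" using mult measurable_from_subalg[OF sub] by blast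
  have "(\<integral>\<^sup>+\<omega>. indicator C \<omega> * (c * u \<omega>) \<partial>M) = c * (\<integral>\<^sup>+\<omega>. indicator C \<omega> * u \<omega> \<partial>M)"
    using um C by (subst nn_integral_cmult[symmetric]) (auto simp: mult_ac)
  then show ?case using mult um by (simp add: nn_integral_cmult mult_ac)
next
  case (add u v)
  have um: "u \<in> borel_measurable M" and vm: "v \<in> borel_measurable M"
    using add measurable_from_subalg[OF sub] by blast+
  have "(\<integral>\<^sup>+\<omega>. indicator C \<omega> * (v \<omega> + u \<omega>) \<partial>M) = (\<integral>\<^sup>+\<omega>. indicator C \<omega> * v \<omega> \<partial>M) + (\<integral>\<^sup>+\<omega>. indicator C \<omega> * u \<omega> \<partial>M)"
    using um vm C by (simp add: distrib_left nn_integral_add)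
  then show ?case using add um vm by (simp add: nn_integral_add distrib_left)
next
  case (seq U)
  have Um: "U i \<in> borel_measurable M" for i using seq measurable_from_subalg[OF sub] by blast
  have "(\<integral>\<^sup>+\<omega>. indicator C \<omega> * (SUP i. U i) \<omega> \<partial>M) = (\<integral>\<^sup>+\<omega>. (SUP i. indicator C \<omega> * U i \<omega>) \<partial>M)"
    by (simp add: SUP_mult_left_ennreal image_comp)
  also have "\<dots> = (SUP i. (\<integral>\<^sup>+\<omega>. indicator C \<omega> * U i \<omega> \<partial>M))"
  proof (rule nn_integral_monotone_convergence_SUP)
    show "incseq (\<lambda>i \<omega>. indicator C \<omega> * U i \<omega>)"
      unfolding incseq_def le_fun_def
    proof (intro allI impI)
      fix m n :: nat and x assume "m \<le> n"
      then have "U m x \<le> U n x" using \<open>incseq U\<close> by (simp add: incseq_def le_fun_def)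
      then show "indicator C x * U m x \<le> indicator C x * U n x" by (rule mult_left_mono) simp
    qed
    show "\<And>i. (\<lambda>\<omega>. indicator C \<omega> * U i \<omega>) \<in> borel_measurable M" using Um C by simp
  qed
  also have "\<dots> = (SUP i. emeasure M C * (\<integral>\<^sup>+\<omega>. U i \<omega> \<partial>M))" using seq by simp
  also have "\<dots> = emeasure M C * (SUP i. (\<integral>\<^sup>+\<omega>. U i \<omega> \<partial>M))"
    by (simp add: SUP_mult_left_ennreal image_comp)
  also have "(SUP i. (\<integral>\<^sup>+\<omega>. U i \<omega> \<partial>M)) = (\<integral>\<^sup>+\<omega>. (SUP i. U i) \<omega> \<partial>M)"
    unfolding SUP_apply by (rule nn_integral_monotone_convergence_SUP[symmetric]) (use Um \<open>incseq U\<close> in auto)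
  finally show ?case .
qed

lemma dynkin_nn_eq:
  assumes fin: "finite_measure M"
    and Gs: "Int_stable G" "G \<subseteq> Pow (space M)" "sigma_sets (space M) G \<subseteq> sets M" "space M \<in> G"
    and f1[measurable]: "f1 \<in> borel_measurable M" and f2[measurable]: "f2 \<in> borel_measurable M"
    and fin1: "(\<integral>\<^sup>+x. f1 x \<partial>M) < \<infinity>" and fin2: "(\<integral>\<^sup>+x. f2 x \<partial>M) < \<infinity>"
    and bas: "\<And>A. A \<in> G \<Longrightarrow> (\<integral>\<^sup>+x. f1 x * indicator A x \<partial>M) = (\<integral>\<^sup>+x. f2 x * indicator A x \<partial>M)"
    and A: "A \<in> sigma_sets (space M) G"
  shows "(\<integral>\<^sup>+x. f1 x * indicator A x \<partial>M) = (\<integral>\<^sup>+x. f2 x * indicator A x \<partial>M)"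
  using Gs(1,2) A
proof (induction rule: sigma_sets_induct_disjoint)
  case (basic A) then show ?case by (rule bas)
next
  case empty then show ?case by simp
next
  case (compl A)
  have AM: "A \<in> sets M" using compl Gs by auto
  have split: "(\<integral>\<^sup>+x. f x * indicator (space M) x \<partial>M) = (\<integral>\<^sup>+x. f x * indicator A x \<partial>M) + (\<integral>\<^sup>+x. f x * indicator (space M - A) x \<partial>M)"
    if [measurable]: "f \<in> borel_measurable M" for f
  proof -
    have "(\<integral>\<^sup>+x. f x * indicator (space M) x \<partial>M) = (\<integral>\<^sup>+x. f x * indicator A x + f x * indicator (space M - A) x \<partial>M)"
      using AM sets.sets_into_space[OF AM] by (intro nn_integral_cong) (auto simp: indicator_def)
    also have "\<dots> = (\<integral>\<^sup>+x. f x * indicator A x \<partial>M) + (\<integral>\<^sup>+x. f x * indicator (space M - A) x \<partial>M)"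
      using AM by (intro nn_integral_add) auto
    finally show ?thesis .
  qed
  have le: "(\<integral>\<^sup>+x. f x * indicator A x \<partial>M) < \<infinity>" if "(\<integral>\<^sup>+x. f x \<partial>M) < \<infinity>" for f
    using that by (rule le_less_trans[rotated]) (intro nn_integral_mono, simp add: indicator_def)
  have S: "(\<integral>\<^sup>+x. f1 x * indicator (space M) x \<partial>M) = (\<integral>\<^sup>+x. f2 x * indicator (space M) x \<partial>M)"
    using bas Gs(4) by blast
  have "(\<integral>\<^sup>+x. f1 x * indicator A x \<partial>M) + (\<integral>\<^sup>+x. f1 x * indicator (space M - A) x \<partial>M)
      = (\<integral>\<^sup>+x. f1 x * indicator A x \<partial>M) + (\<integral>\<^sup>+x. f2 x * indicator (space M - A) x \<partial>M)"
    using S split[OF f1] split[OF f2] compl.IH by simp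
  then show ?case using le[OF fin1] by (auto simp: ennreal_add_left_cancel top_unique)
next
  case (union A)
  have AM: "A i \<in> sets M" for i using union(2) Gs(3) by auto
  have eq: "(\<integral>\<^sup>+x. f x * indicator (\<Union>i. A i) x \<partial>M) = (\<Sum>i. \<integral>\<^sup>+x. f x * indicator (A i) x \<partial>M)"
    if [measurable]: "f \<in> borel_measurable M" for f
  proof -
    have "(\<integral>\<^sup>+x. f x * indicator (\<Union>i. A i) x \<partial>M) = (\<integral>\<^sup>+x. (\<Sum>i. f x * indicator (A i) x) \<partial>M)"
      using suminf_indicator[OF union.hyps(1)] by (simp add: ennreal_suminf_cmult)
    also have "\<dots> = (\<Sum>i. \<integral>\<^sup>+x. f x * indicator (A i) x \<partial>M)"
      using AM by (intro nn_integral_suminf) auto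
    finally show ?thesis .
  qed
  show ?case unfolding eq[OF f1] eq[OF f2] using union.IH by simp
qed




locale setting =
  fixes Hop :: "complex^'n^'n"
    and D :: nat and E :: "nat \<Rightarrow> real" and P :: "nat \<Rightarrow> complex^'n^'n"
    and \<rho>0 :: "complex^'n^'n" and hbar \<sigma> :: real
    and M :: "'a measure" and B :: "real \<Rightarrow> 'a \<Rightarrow> real" and H :: "'a \<Rightarrow> real"
    and p :: "nat \<Rightarrow> real" and \<xi> :: "real \<Rightarrow> 'a \<Rightarrow> real"
    and t :: real
  assumes distinct: "inj_on E {1..D}"
    and proj: "\<And>r. r \<in> {1..D} \<Longrightarrow> orth_proj (P r) \<and> P r \<noteq> 0"
    and orth: "\<And>r s. r \<in> {1..D} \<Longrightarrow> s \<in> {1..D} \<Longrightarrow> r \<noteq> s \<Longrightarrow> P r ** P s = 0"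
    and complete: "(\<Sum>r=1..D. P r) = mat 1"
    and dens: "density_matrix \<rho>0"
    and p_def: "\<And>r. p r = Re (trace (\<rho>0 ** P r))"
    and PS: "prob_space M"
    and BM: "std_brownian_motion M B"
    and Hrv: "H \<in> borel_measurable M"
    and indep: "prob_space.indep_set M {H -` A \<inter> space M | A. A \<in> sets borel}
                  (sets (sigma (space M) {B s -` A \<inter> space M | s A. s \<ge> 0 \<and> A \<in> sets borel}))"
    and Hdist: "\<And>r. r \<in> {1..D} \<Longrightarrow> measure M {\<omega> \<in> space M. H \<omega> = E r} = p r"
    and xi_def: "\<And>s \<omega>. \<xi> s \<omega> = \<sigma> * s * H \<omega> + B s \<omega>"
    and t: "t \<ge> 0"
begin

interpretation prob_space M by (rule PS)

lemma Bm[measurable]: "s \<ge> 0 \<Longrightarrow> B s \<in> borel_measurable M"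
  using BM by (simp add: std_brownian_motion_def)

lemma xi_eq: "\<xi> s = (\<lambda>\<omega>. \<sigma> * s * H \<omega> + B s \<omega>)"
  by (rule ext) (rule xi_def)

lemma xim[measurable]: "s \<ge> 0 \<Longrightarrow> \<xi> s \<in> borel_measurable M"
  unfolding xi_eq using Hrv by measurable

lemma pnn: "r \<in> {1..D} \<Longrightarrow> p r \<ge> 0"
  using Hdist[of r] by (metis measure_nonneg)

lemma psum: "(\<Sum>r=1..D. p r) = 1"
proof -
  have "(\<Sum>r=1..D. trace (\<rho>0 ** P r)) = trace (\<rho>0 ** (\<Sum>r=1..D. P r))"
    by (simp only: sum_mult_right trace_sum)
  also have "\<dots> = 1" using complete dens by (simp add: density_matrix_def)
  finally show ?thesis by (simp add: p_def Re_sum[symmetric])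
qed

definition f where "f r x = exp (\<sigma> * E r * x - \<sigma>\<^sup>2 * (E r)\<^sup>2 * t / 2)"
definition Z where "Z x = (\<Sum>r=1..D. p r * f r x)"
definition \<pi> where "\<pi> n x = p n * f n x / Z x"

lemma Zpos: "Z x > 0"
proof -
  obtain r where r: "r \<in> {1..D}" "p r > 0"
  proof (rule ccontr)
    assume "\<not> thesis"
    then have "\<forall>r\<in>{1..D}. p r \<le> 0" using that by force
    then have "(\<Sum>r=1..D. p r) \<le> 0" by (intro sum_nonpos) auto
    then show False using psum by simp
  qed
  show ?thesis unfolding Z_def
    using r pnn by (intro sum_pos2[of _ r]) (auto simp: f_def)
qed

lemma \<pi>_le: "n \<in> {1..D} \<Longrightarrow> \<pi> n x \<le> 1" and \<pi>_nn: "n \<in> {1..D} \<Longrightarrow> \<pi> n x \<ge> 0"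
proof -
  assume n: "n \<in> {1..D}"
  have "p n * f n x \<le> Z x" unfolding Z_def
    using n pnn by (intro member_le_sum) (auto simp: f_def)
  then show "\<pi> n x \<le> 1" using Zpos[of x] by (simp add: \<pi>_def)
  show "\<pi> n x \<ge> 0" using Zpos[of x] pnn[OF n] by (simp add: \<pi>_def f_def)
qed

lemma \<pi>Z: "\<pi> n x * Z x = p n * f n x"
  using Zpos[of x] by (simp add: \<pi>_def)

lemma AE_H: "AE \<omega> in M. \<exists>r\<in>{1..D}. H \<omega> = E r"
proof -
  have "measure M (\<Union>r\<in>{1..D}. {\<omega> \<in> space M. H \<omega> = E r}) = (\<Sum>r=1..D. measure M {\<omega> \<in> space M. H \<omega> = E r})"
  proof (rule finite_measure_finite_Union)
    have "{\<omega> \<in> space M. H \<omega> = E r} \<in> sets M" for r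
    proof -
      have "{\<omega> \<in> space M. H \<omega> = E r} = H -` {E r} \<inter> space M" by auto
      then show ?thesis using measurable_sets[OF Hrv, of "{E r}"] by simp
    qed
    then show "(\<lambda>r. {\<omega> \<in> space M. H \<omega> = E r}) ` {1..D} \<subseteq> sets M" by blast
    show "disjoint_family_on (\<lambda>r. {\<omega> \<in> space M. H \<omega> = E r}) {1..D}"
      unfolding disjoint_family_on_def
    proof (intro ballI impI)
      fix r s assume "r \<in> {1..D}" "s \<in> {1..D}" "r \<noteq> s"
      then have "E r \<noteq> E s" using distinct by (meson inj_onD)
      then show "{\<omega> \<in> space M. H \<omega> = E r} \<inter> {\<omega> \<in> space M. H \<omega> = E s} = {}" by auto
    qed
  qed simp
  also have "\<dots> = 1" using Hdist psum by simp
  finally have "AE \<omega> in M. \<omega> \<in> (\<Union>r\<in>{1..D}. {\<omega> \<in> space M. H \<omega> = E r})"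
    by (intro AE_prob_1)
  then show ?thesis by auto
qed


definition F where "F = gen_filtration M \<xi> t"
definition G0 where "G0 = {\<xi> s -` A \<inter> space M | s A. s \<in> {0..t} \<and> A \<in> sets borel}"
definition SB where "SB = sigma (space M) {B s -` A \<inter> space M | s A. s \<ge> 0 \<and> A \<in> sets borel}"
definition GG where "GG = {{\<omega>\<in>space M. \<forall>j\<in>J. \<xi> j \<omega> \<in> C j} | J C. finite J \<and> J \<subseteq> {0..t} \<and> t \<in> J \<and> (\<forall>j\<in>J. C j \<in> sets borel)}"

lemma G0_sets: "G0 \<subseteq> sets M"
  unfolding G0_def by auto

lemma sets_F: "sets F = sigma_sets (space M) G0"
  unfolding F_def gen_filtration_def G0_def by (rule sets_measure_of) auto

lemma space_F: "space F = space M"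
  unfolding F_def gen_filtration_def by (simp add: space_measure_of_conv)

lemma subF: "subalgebra M F"
  unfolding subalgebra_def sets_F space_F using G0_sets by (simp add: sets.sigma_sets_subset)

lemma xiF[measurable]: "\<xi> t \<in> borel_measurable F"
proof (rule measurableI)
  fix A :: "real set" assume "A \<in> sets borel"
  then show "\<xi> t -` A \<inter> space F \<in> sets F"
    unfolding sets_F space_F G0_def using t by (intro sigma_sets.Basic) auto
qed simp

lemma subB: "subalgebra M SB"
proof -
  have "{B s -` A \<inter> space M | s A. s \<ge> 0 \<and> A \<in> sets borel} \<subseteq> sets M" by auto
  moreover have "{B s -` A \<inter> space M | s A. s \<ge> 0 \<and> A \<in> sets borel} \<subseteq> Pow (space M)" by auto
  ultimately show ?thesis unfolding subalgebra_def SB_def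
    by (simp add: sets_measure_of sets.sigma_sets_subset)
qed

lemma BSB[measurable]: "s \<ge> 0 \<Longrightarrow> B s \<in> borel_measurable SB"
proof (rule measurableI)
  fix A :: "real set" assume "A \<in> sets borel" "s \<ge> 0"
  moreover have "{B s -` A \<inter> space M | s A. s \<ge> 0 \<and> A \<in> sets borel} \<subseteq> Pow (space M)" by auto
  ultimately show "B s -` A \<inter> space SB \<in> sets SB"
    unfolding SB_def by (auto simp: sets_measure_of intro!: sigma_sets.Basic)
qed simp

lemma indep_SB: "indep_set {H -` A \<inter> space M | A. A \<in> sets borel} (sets SB)"
  using indep unfolding SB_def .

lemma GG_Int: "Int_stable GG"
proof (rule Int_stableI)
  fix a b assume "a \<in> GG" "b \<in> GG"
  then obtain J1 C1 J2 C2 where a: "a = {\<omega>\<in>space M. \<forall>j\<in>J1. \<xi> j \<omega> \<in> C1 j}" "finite J1" "J1 \<subseteq> {0..t}" "t \<in> J1" "\<forall>j\<in>J1. C1 j \<in> sets borel"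
    and b: "b = {\<omega>\<in>space M. \<forall>j\<in>J2. \<xi> j \<omega> \<in> C2 j}" "finite J2" "J2 \<subseteq> {0..t}" "t \<in> J2" "\<forall>j\<in>J2. C2 j \<in> sets borel"
    unfolding GG_def by blast
  define C where "C j = (if j \<in> J1 then C1 j else UNIV) \<inter> (if j \<in> J2 then C2 j else UNIV)" for j
  have "a \<inter> b = {\<omega>\<in>space M. \<forall>j\<in>J1 \<union> J2. \<xi> j \<omega> \<in> C j}"
    unfolding a b C_def by auto
  moreover have "\<forall>j\<in>J1 \<union> J2. C j \<in> sets borel" using a b by (auto simp: C_def)
  ultimately show "a \<inter> b \<in> GG" unfolding GG_def using a b
    by (intro CollectI exI[of _ "J1 \<union> J2"] exI[of _ C]) auto
qed

lemma GG_sets: "GG \<subseteq> sets M"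
proof
  fix a assume "a \<in> GG"
  then obtain J C where a: "a = {\<omega>\<in>space M. \<forall>j\<in>J. \<xi> j \<omega> \<in> C j}" "finite J" "J \<subseteq> {0..t}" "\<forall>j\<in>J. C j \<in> sets borel"
    unfolding GG_def by blast
  have "Measurable.pred M (\<lambda>\<omega>. \<forall>j\<in>J. \<xi> j \<omega> \<in> C j)"
  proof (rule pred_intros_finite(3)[OF a(2)])
    fix j assume "j \<in> J"
    then have [measurable]: "C j \<in> sets borel" and "j \<ge> 0" using a by auto
    then show "Measurable.pred M (\<lambda>\<omega>. \<xi> j \<omega> \<in> C j)" by measurable
  qed
  then show "a \<in> sets M" unfolding a(1) pred_def .
qed

lemma GG_pow: "GG \<subseteq> Pow (space M)"
  unfolding GG_def by auto

lemma space_GG: "space M \<in> GG"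
proof -
  have "space M = {\<omega>\<in>space M. \<forall>j\<in>{t}. \<xi> j \<omega> \<in> (\<lambda>_. UNIV) j}" by auto
  then show ?thesis unfolding GG_def using t
    by (intro CollectI exI[of _ "{t}"] exI[of _ "\<lambda>_. UNIV"] conjI) auto
qed

lemma G0_GG: "G0 \<subseteq> GG"
proof
  fix a assume "a \<in> G0"
  then obtain s A where a: "a = \<xi> s -` A \<inter> space M" "s \<in> {0..t}" "A \<in> sets borel"
    unfolding G0_def by blast
  define C where "C j = (if j = s then A else UNIV)" for j
  have "a = {\<omega>\<in>space M. \<forall>j\<in>{s, t}. \<xi> j \<omega> \<in> C j}" unfolding a C_def by auto
  moreover have "\<forall>j\<in>{s, t}. C j \<in> sets borel" using a by (auto simp: C_def)
  ultimately show "a \<in> GG" unfolding GG_def using a t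
    by (intro CollectI exI[of _ "{s, t}"] exI[of _ C] conjI) auto
qed

lemma setint_nn:
  assumes [measurable]: "g \<in> borel_measurable M" and nn: "\<And>x. 0 \<le> g x" and [measurable]: "A \<in> sets M"
  shows "(\<integral>x\<in>A. g x \<partial>M) = enn2real (\<integral>\<^sup>+x. ennreal (g x) * indicator A x \<partial>M)"
proof -
  have "(\<integral>x\<in>A. g x \<partial>M) = enn2real (\<integral>\<^sup>+x. ennreal (indicator A x *\<^sub>R g x) \<partial>M)"
    unfolding set_lebesgue_integral_def using nn by (intro integral_eq_nn_integral) auto
  also have "(\<integral>\<^sup>+x. ennreal (indicator A x *\<^sub>R g x) \<partial>M) = (\<integral>\<^sup>+x. ennreal (g x) * indicator A x \<partial>M)"
    by (intro nn_integral_cong) (simp add: indicator_def)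
  finally show ?thesis .
qed


lemma basic:
  assumes J: "finite J" "J \<subseteq> {0..t}" "t \<in> J" and C: "\<forall>j\<in>J. C j \<in> sets borel" and n: "n \<in> {1..D}"
  shows "(\<integral>\<^sup>+\<omega>. ennreal (indicator {\<omega>\<in>space M. H \<omega> = E n} \<omega>) * indicator {\<omega>\<in>space M. \<forall>j\<in>J. \<xi> j \<omega> \<in> C j} \<omega> \<partial>M)
       = (\<integral>\<^sup>+\<omega>. ennreal (\<pi> n (\<xi> t \<omega>)) * indicator {\<omega>\<in>space M. \<forall>j\<in>J. \<xi> j \<omega> \<in> C j} \<omega> \<partial>M)"
proof -
  let ?A = "{\<omega>\<in>space M. \<forall>j\<in>J. \<xi> j \<omega> \<in> C j}"
  define \<Psi> where "\<Psi> y = (indicator (Pi\<^sub>E J C) y :: ennreal)" for y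
  have PiEm: "Pi\<^sub>E J C \<in> sets (Pi\<^sub>M J (\<lambda>_. borel))"
    using J C by (intro sets_PiM_I_finite) auto
  have \<Psi>m[measurable]: "\<Psi> \<in> borel_measurable (Pi\<^sub>M J (\<lambda>_. borel))"
    unfolding \<Psi>_def using PiEm by (rule borel_measurable_indicator)
  define Cr where "Cr r = {\<omega>\<in>space M. H \<omega> = E r}" for r
  have Cr_in: "Cr r \<in> {H -` A \<inter> space M | A. A \<in> sets borel}" for r
    unfolding Cr_def by (intro CollectI exI[of _ "{E r}"]) auto
  have CrM[measurable]: "Cr r \<in> sets M" for r
  proof -
    have "Cr r = H -` {E r} \<inter> space M" by (auto simp: Cr_def)
    then show ?thesis using measurable_sets[OF Hrv, of "{E r}"] by simp
  qed
  define VB where "VB c \<omega> = (\<lambda>j\<in>J. B j \<omega> + c * j)" for c \<omega>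
  define BJ where "BJ \<omega> = (\<lambda>j\<in>J. B j \<omega>)" for \<omega>
  have VBm[measurable]: "VB c \<in> measurable SB (Pi\<^sub>M J (\<lambda>_. borel))" for c
    unfolding VB_def
  proof (rule measurable_restrict)
    fix j assume "j \<in> J"
    then have "j \<ge> 0" using J by auto
    then show "(\<lambda>\<omega>. B j \<omega> + c * j) \<in> borel_measurable SB" by measurable
  qed
  have BJt: "BJ \<omega> t = B t \<omega>" for \<omega> using J by (simp add: BJ_def)
  have indA: "indicator ?A \<omega> = \<Psi> (VB (\<sigma> * E r) \<omega>)" if "\<omega> \<in> space M" "H \<omega> = E r" for \<omega> r
  proof -
    have "\<xi> j \<omega> = B j \<omega> + \<sigma> * E r * j" for j using that by (simp add: xi_def)
    then show ?thesis using that by (simp add: \<Psi>_def VB_def indicator_def restrict_PiE_iff Pi_iff)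
  qed
  have CMr: "(\<integral>\<^sup>+\<omega>. Gf (VB (\<sigma> * E r) \<omega>) \<partial>M) = (\<integral>\<^sup>+\<omega>. Gf (BJ \<omega>) * ennreal (f r (B t \<omega>)) \<partial>M)"
    if [measurable]: "Gf \<in> borel_measurable (Pi\<^sub>M J (\<lambda>_. borel))" for Gf r
  proof -
    have "(\<integral>\<^sup>+\<omega>. Gf (VB (\<sigma> * E r) \<omega>) \<partial>M) = (\<integral>\<^sup>+\<omega>. Gf (BJ \<omega>) * ennreal (exp ((\<sigma> * E r) * B t \<omega> - (\<sigma> * E r)\<^sup>2 * t / 2)) \<partial>M)"
      unfolding VB_def BJ_def by (rule CM[OF BM J that])
    also have "\<dots> = (\<integral>\<^sup>+\<omega>. Gf (BJ \<omega>) * ennreal (f r (B t \<omega>)) \<partial>M)"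
      by (simp add: f_def power_mult_distrib)
    finally show ?thesis .
  qed
  have indf: "(\<integral>\<^sup>+\<omega>. indicator (Cr r) \<omega> * g \<omega> \<partial>M) = ennreal (p r) * (\<integral>\<^sup>+\<omega>. g \<omega> \<partial>M)"
    if "g \<in> borel_measurable SB" "r \<in> {1..D}" for g r
  proof -
    have "(\<integral>\<^sup>+\<omega>. indicator (Cr r) \<omega> * g \<omega> \<partial>M) = emeasure M (Cr r) * (\<integral>\<^sup>+\<omega>. g \<omega> \<partial>M)"
      by (rule indep_fun[OF PS subB indep_SB Cr_in CrM that(1)])
    also have "emeasure M (Cr r) = ennreal (p r)"
      using Hdist[OF that(2)] by (simp add: emeasure_eq_measure Cr_def)
    finally show ?thesis .
  qed
  have "(\<integral>\<^sup>+\<omega>. ennreal (indicator {\<omega>\<in>space M. H \<omega> = E n} \<omega>) * indicator ?A \<omega> \<partial>M)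
      = (\<integral>\<^sup>+\<omega>. indicator (Cr n) \<omega> * \<Psi> (VB (\<sigma> * E n) \<omega>) \<partial>M)"
  proof (rule nn_integral_cong)
    fix \<omega> assume "\<omega> \<in> space M"
    then show "ennreal (indicator {\<omega>\<in>space M. H \<omega> = E n} \<omega>) * indicator ?A \<omega> = indicator (Cr n) \<omega> * \<Psi> (VB (\<sigma> * E n) \<omega>)"
      using indA[of \<omega> n] by (cases "H \<omega> = E n") (simp_all add: Cr_def)
  qed
  also have "\<dots> = ennreal (p n) * (\<integral>\<^sup>+\<omega>. \<Psi> (VB (\<sigma> * E n) \<omega>) \<partial>M)"
    using n by (intro indf measurable_compose[OF VBm \<Psi>m])
  also have "\<dots> = ennreal (p n) * (\<integral>\<^sup>+\<omega>. \<Psi> (BJ \<omega>) * ennreal (f n (B t \<omega>)) \<partial>M)"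
    by (simp add: CMr)
  finally have LHS: "(\<integral>\<^sup>+\<omega>. ennreal (indicator {\<omega>\<in>space M. H \<omega> = E n} \<omega>) * indicator ?A \<omega> \<partial>M)
      = ennreal (p n) * (\<integral>\<^sup>+\<omega>. \<Psi> (BJ \<omega>) * ennreal (f n (B t \<omega>)) \<partial>M)" .
  define Gf where "Gf y = ennreal (\<pi> n (y t)) * \<Psi> y" for y :: "real \<Rightarrow> real"
  have Gfm[measurable]: "Gf \<in> borel_measurable (Pi\<^sub>M J (\<lambda>_. borel))"
  proof -
    have [measurable]: "\<pi> n \<in> borel_measurable borel"
      unfolding \<pi>_def Z_def f_def by measurable
    have "(\<lambda>y. y t) \<in> borel_measurable (Pi\<^sub>M J (\<lambda>_. borel))"
      using J by (intro measurable_component_singleton) auto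
    then show ?thesis unfolding Gf_def by measurable
  qed
  have "(\<integral>\<^sup>+\<omega>. ennreal (\<pi> n (\<xi> t \<omega>)) * indicator ?A \<omega> \<partial>M)
      = (\<integral>\<^sup>+\<omega>. (\<Sum>r\<in>{1..D}. indicator (Cr r) \<omega> * Gf (VB (\<sigma> * E r) \<omega>)) \<partial>M)"
  proof (rule nn_integral_cong_AE)
    show "AE \<omega> in M. ennreal (\<pi> n (\<xi> t \<omega>)) * indicator ?A \<omega> = (\<Sum>r\<in>{1..D}. indicator (Cr r) \<omega> * Gf (VB (\<sigma> * E r) \<omega>))"
      using AE_H AE_space
    proof eventually_elim
      case (elim \<omega>)
      then obtain r0 where r0: "r0 \<in> {1..D}" "H \<omega> = E r0" by blast
      have "(\<Sum>r\<in>{1..D}. indicator (Cr r) \<omega> * Gf (VB (\<sigma> * E r) \<omega>)) = Gf (VB (\<sigma> * E r0) \<omega>)"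
      proof (subst sum.remove[OF _ r0(1)])
        have "indicator (Cr r) \<omega> = (0::ennreal)" if "r \<in> {1..D} - {r0}" for r
        proof -
          have "E r \<noteq> E r0" using that r0(1) inj_onD[OF distinct, of r r0] by auto
          then show ?thesis using r0 by (simp add: Cr_def indicator_def)
        qed
        then show "indicator (Cr r0) \<omega> * Gf (VB (\<sigma> * E r0) \<omega>) + (\<Sum>r\<in>{1..D} - {r0}. indicator (Cr r) \<omega> * Gf (VB (\<sigma> * E r) \<omega>)) = Gf (VB (\<sigma> * E r0) \<omega>)"
          using elim r0 by (simp add: Cr_def)
      qed simp
      also have "\<dots> = ennreal (\<pi> n (\<xi> t \<omega>)) * indicator ?A \<omega>"
        using indA[of \<omega> r0] elim r0 J by (simp add: Gf_def VB_def xi_def algebra_simps)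
      finally show ?case by simp
    qed
  qed
  also have "\<dots> = (\<Sum>r\<in>{1..D}. \<integral>\<^sup>+\<omega>. indicator (Cr r) \<omega> * Gf (VB (\<sigma> * E r) \<omega>) \<partial>M)"
  proof (rule nn_integral_sum)
    fix r
    have "(\<lambda>\<omega>. Gf (VB (\<sigma> * E r) \<omega>)) \<in> borel_measurable M"
      by (rule measurable_compose[OF measurable_from_subalg[OF subB VBm] Gfm])
    then show "(\<lambda>\<omega>. indicator (Cr r) \<omega> * Gf (VB (\<sigma> * E r) \<omega>)) \<in> borel_measurable M" by measurable
  qed
  also have "\<dots> = (\<Sum>r\<in>{1..D}. ennreal (p r) * (\<integral>\<^sup>+\<omega>. Gf (BJ \<omega>) * ennreal (f r (B t \<omega>)) \<partial>M))"
  proof (rule sum.cong[OF refl])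
    fix r assume r: "r \<in> {1..D}"
    have "(\<integral>\<^sup>+\<omega>. indicator (Cr r) \<omega> * Gf (VB (\<sigma> * E r) \<omega>) \<partial>M) = ennreal (p r) * (\<integral>\<^sup>+\<omega>. Gf (VB (\<sigma> * E r) \<omega>) \<partial>M)"
      using r by (intro indf measurable_compose[OF VBm Gfm])
    then show "(\<integral>\<^sup>+\<omega>. indicator (Cr r) \<omega> * Gf (VB (\<sigma> * E r) \<omega>) \<partial>M) = ennreal (p r) * (\<integral>\<^sup>+\<omega>. Gf (BJ \<omega>) * ennreal (f r (B t \<omega>)) \<partial>M)"
      by (simp add: CMr)
  qed
  also have "\<dots> = (\<Sum>r\<in>{1..D}. \<integral>\<^sup>+\<omega>. Gf (BJ \<omega>) * ennreal (p r * f r (B t \<omega>)) \<partial>M)"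
  proof (rule sum.cong[OF refl])
    fix r assume r: "r \<in> {1..D}"
    have BJm: "BJ \<in> measurable M (Pi\<^sub>M J (\<lambda>_. borel))"
      unfolding BJ_def using J by (intro measurable_restrict) auto
    have "ennreal (p r) * (\<integral>\<^sup>+\<omega>. Gf (BJ \<omega>) * ennreal (f r (B t \<omega>)) \<partial>M)
        = (\<integral>\<^sup>+\<omega>. ennreal (p r) * (Gf (BJ \<omega>) * ennreal (f r (B t \<omega>))) \<partial>M)"
      using BJm t by (intro nn_integral_cmult[symmetric]) (measurable, auto simp: f_def)
    also have "\<dots> = (\<integral>\<^sup>+\<omega>. Gf (BJ \<omega>) * ennreal (p r * f r (B t \<omega>)) \<partial>M)"
      using pnn[OF r] by (intro nn_integral_cong) (simp add: ennreal_mult f_def mult_ac)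
    finally show "ennreal (p r) * (\<integral>\<^sup>+\<omega>. Gf (BJ \<omega>) * ennreal (f r (B t \<omega>)) \<partial>M) = (\<integral>\<^sup>+\<omega>. Gf (BJ \<omega>) * ennreal (p r * f r (B t \<omega>)) \<partial>M)" .
  qed
  also have "\<dots> = (\<integral>\<^sup>+\<omega>. (\<Sum>r\<in>{1..D}. Gf (BJ \<omega>) * ennreal (p r * f r (B t \<omega>))) \<partial>M)"
  proof (rule nn_integral_sum[symmetric])
    fix r
    have BJm: "BJ \<in> measurable M (Pi\<^sub>M J (\<lambda>_. borel))"
      unfolding BJ_def using J by (intro measurable_restrict) auto
    show "(\<lambda>\<omega>. Gf (BJ \<omega>) * ennreal (p r * f r (B t \<omega>))) \<in> borel_measurable M"
      using BJm t unfolding f_def by measurable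
  qed
  also have "\<dots> = (\<integral>\<^sup>+\<omega>. ennreal (p n) * (\<Psi> (BJ \<omega>) * ennreal (f n (B t \<omega>))) \<partial>M)"
  proof (rule nn_integral_cong)
    fix \<omega> assume "\<omega> \<in> space M"
    have "(\<Sum>r\<in>{1..D}. Gf (BJ \<omega>) * ennreal (p r * f r (B t \<omega>))) = Gf (BJ \<omega>) * ennreal (Z (B t \<omega>))"
    proof -
      have "(\<Sum>r\<in>{1..D}. ennreal (p r * f r (B t \<omega>))) = ennreal (Z (B t \<omega>))"
        unfolding Z_def by (rule sum_ennreal) (use pnn in \<open>auto simp: f_def\<close>)
      then show ?thesis by (simp only: sum_distrib_left[symmetric])
    qed
    also have "\<dots> = \<Psi> (BJ \<omega>) * ennreal (\<pi> n (B t \<omega>) * Z (B t \<omega>))"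
      using ennreal_mult[OF \<pi>_nn[OF n, of "B t \<omega>"] less_imp_le[OF Zpos[of "B t \<omega>"]]]
      by (simp add: Gf_def BJt mult_ac)
    also have "\<dots> = ennreal (p n) * (\<Psi> (BJ \<omega>) * ennreal (f n (B t \<omega>)))"
      unfolding \<pi>Z using ennreal_mult[OF pnn[OF n], of "f n (B t \<omega>)"] by (simp add: f_def mult_ac)
    finally show "(\<Sum>r\<in>{1..D}. Gf (BJ \<omega>) * ennreal (p r * f r (B t \<omega>))) = ennreal (p n) * (\<Psi> (BJ \<omega>) * ennreal (f n (B t \<omega>)))" .
  qed
  also have "\<dots> = ennreal (p n) * (\<integral>\<^sup>+\<omega>. \<Psi> (BJ \<omega>) * ennreal (f n (B t \<omega>)) \<partial>M)"
  proof (rule nn_integral_cmult)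
    have BJm: "BJ \<in> measurable M (Pi\<^sub>M J (\<lambda>_. borel))"
      unfolding BJ_def using J by (intro measurable_restrict) auto
    show "(\<lambda>\<omega>. \<Psi> (BJ \<omega>) * ennreal (f n (B t \<omega>))) \<in> borel_measurable M"
      using BJm t unfolding f_def by measurable
  qed
  finally show ?thesis using LHS by simp
qed


lemma fin_int: "(\<And>x. g x \<le> 1) \<Longrightarrow> (\<integral>\<^sup>+x. ennreal (g x) \<partial>M) < \<infinity>"
proof -
  assume g: "\<And>x. g x \<le> 1"
  have "(\<integral>\<^sup>+x. ennreal (g x) \<partial>M) \<le> (\<integral>\<^sup>+x. 1 \<partial>M)"
    using g by (intro nn_integral_mono) simp
  also have "\<dots> = 1" by (simp add: emeasure_space_1)
  finally show ?thesis by (simp add: le_less_trans)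
qed

lemma ce:
  assumes n: "n \<in> {1..D}"
  shows "AE \<omega> in M. real_cond_exp M F (\<lambda>\<omega>'. indicator {\<omega>'' \<in> space M. H \<omega>'' = E n} \<omega>') \<omega> = \<pi> n (\<xi> t \<omega>)"
proof -
  have fm: "finite_measure M" using PS by (simp add: prob_space_def)
  have "finite_measure_subalgebra M F"
    using fm subF by (simp add: finite_measure_subalgebra_def finite_measure_subalgebra_axioms_def)
  then interpret FS: sigma_finite_subalgebra M F by (rule finite_measure_subalgebra_is_sigma_finite)
  let ?S = "{\<omega>'' \<in> space M. H \<omega>'' = E n}"
  have SM: "?S \<in> sets M"
  proof -
    have "?S = H -` {E n} \<inter> space M" by auto
    then show ?thesis using measurable_sets[OF Hrv, of "{E n}"] by simp
  qed
  have indm[measurable]: "(\<lambda>\<omega>'. indicator ?S \<omega>' :: real) \<in> borel_measurable M"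
    using SM by (rule borel_measurable_indicator)
  have \<pi>b[measurable]: "\<pi> n \<in> borel_measurable borel"
    unfolding \<pi>_def Z_def f_def by measurable
  have \<pi>F: "(\<lambda>\<omega>. \<pi> n (\<xi> t \<omega>)) \<in> borel_measurable F"
    by (rule measurable_compose[OF xiF \<pi>b])
  have \<pi>M[measurable]: "(\<lambda>\<omega>. \<pi> n (\<xi> t \<omega>)) \<in> borel_measurable M"
    by (rule measurable_from_subalg[OF subF \<pi>F])
  show ?thesis
  proof (rule FS.real_cond_exp_charact)
    fix A assume AF: "A \<in> sets F"
    have AM[measurable]: "A \<in> sets M" using AF subF by (auto simp: subalgebra_def)
    have AG: "A \<in> sigma_sets (space M) GG"
      using AF sigma_sets_mono'[OF G0_GG] by (auto simp: sets_F)
    have "(\<integral>\<^sup>+x. ennreal (indicator ?S x) * indicator A x \<partial>M) = (\<integral>\<^sup>+x. ennreal (\<pi> n (\<xi> t x)) * indicator A x \<partial>M)"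
    proof (rule dynkin_nn_eq[OF fm GG_Int GG_pow sets.sigma_sets_subset[OF GG_sets] space_GG])
      show "(\<lambda>x. ennreal (indicator ?S x)) \<in> borel_measurable M" by measurable
      show "(\<lambda>x. ennreal (\<pi> n (\<xi> t x))) \<in> borel_measurable M" by measurable
      show "(\<integral>\<^sup>+x. ennreal (indicator ?S x) \<partial>M) < \<infinity>" by (rule fin_int) (simp add: indicator_def)
      show "(\<integral>\<^sup>+x. ennreal (\<pi> n (\<xi> t x)) \<partial>M) < \<infinity>" by (rule fin_int) (rule \<pi>_le[OF n])
      show "A \<in> sigma_sets (space M) GG" by (rule AG)
    next
      fix A' assume "A' \<in> GG"
      then obtain J C where a: "A' = {\<omega>\<in>space M. \<forall>j\<in>J. \<xi> j \<omega> \<in> C j}" "finite J" "J \<subseteq> {0..t}" "t \<in> J" "\<forall>j\<in>J. C j \<in> sets borel"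
        unfolding GG_def by blast
      show "(\<integral>\<^sup>+x. ennreal (indicator ?S x) * indicator A' x \<partial>M) = (\<integral>\<^sup>+x. ennreal (\<pi> n (\<xi> t x)) * indicator A' x \<partial>M)"
        unfolding a(1) by (rule basic[OF a(2-5) n])
    qed
    moreover have "(\<integral>x\<in>A. indicator ?S x \<partial>M) = enn2real (\<integral>\<^sup>+x. ennreal (indicator ?S x) * indicator A x \<partial>M)"
      by (rule setint_nn) auto
    moreover have "(\<integral>x\<in>A. \<pi> n (\<xi> t x) \<partial>M) = enn2real (\<integral>\<^sup>+x. ennreal (\<pi> n (\<xi> t x)) * indicator A x \<partial>M)"
      by (rule setint_nn) (auto simp: \<pi>_nn[OF n])
    ultimately show "(\<integral>x\<in>A. indicator ?S x \<partial>M) = (\<integral>x\<in>A. \<pi> n (\<xi> t x) \<partial>M)" by simp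
  next
    show "integrable M (\<lambda>\<omega>'. indicator ?S \<omega>' :: real)"
      apply (rule integrable_const_bound[where B=1])
      apply (simp add: indicator_def)
      apply (rule indm)
      done
    show "integrable M (\<lambda>\<omega>. \<pi> n (\<xi> t \<omega>))"
      by (rule integrable_const_bound[where B=1]) (auto simp: \<pi>_le[OF n] \<pi>_nn[OF n] abs_le_iff intro: order_trans[OF _ \<pi>_le[OF n]])
    show "(\<lambda>\<omega>. \<pi> n (\<xi> t \<omega>)) \<in> borel_measurable F" by (rule \<pi>F)
  qed
qed

lemma final:
  fixes K \<rho> :: "real \<Rightarrow> 'a \<Rightarrow> complex^'n^'n" and \<Phi> :: "nat \<Rightarrow> nat \<Rightarrow> real \<Rightarrow> 'a \<Rightarrow> real"
  assumes spectral: "Hop = (\<Sum>r=1..D. cscale (complex_of_real (E r)) (P r))"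
    and K_def: "\<And>s \<omega>. K s \<omega> = mexp (cscale (- \<i> * complex_of_real (s / hbar)) Hop
                     + cscale (complex_of_real (\<sigma> * \<xi> s \<omega> / 2)) Hop
                     - cscale (complex_of_real (\<sigma>\<^sup>2 * s / 4)) (Hop ** Hop))"
    and rho_def: "\<And>s \<omega>. \<rho> s \<omega> = cscale (1 / trace (K s \<omega> ** \<rho>0 ** adjoint_mat (K s \<omega>)))
                     (K s \<omega> ** \<rho>0 ** adjoint_mat (K s \<omega>))"
    and Phi_def: "\<And>n m s \<omega>. \<Phi> n m s \<omega> =
        exp (\<sigma> * (E n + E m) * \<xi> s \<omega> / 2 - \<sigma>\<^sup>2 * (E n + E m)\<^sup>2 * s / 8)
        / (\<Sum>r=1..D. p r * exp (\<sigma> * E r * \<xi> s \<omega> - \<sigma>\<^sup>2 * (E r)\<^sup>2 * s / 2))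
        * exp (- \<sigma>\<^sup>2 * (E n - E m)\<^sup>2 * s / 8)"
  shows "AE \<omega> in M. \<rho> t \<omega> =
     (\<Sum>n\<in>{n\<in>{1..D}. p n > 0}.
        cscale (complex_of_real (real_cond_exp M (gen_filtration M \<xi> t)
                   (\<lambda>\<omega>'. indicator {\<omega>'' \<in> space M. H \<omega>'' = E n} \<omega>') \<omega>) / trace (\<rho>0 ** P n))
          (P n ** \<rho>0 ** P n))
   + (\<Sum>n=1..D. \<Sum>m\<in>{1..D} - {n}.
        cscale (exp (- \<i> * complex_of_real ((E n - E m) * t / hbar)) * complex_of_real (\<Phi> n m t \<omega>))
          (P n ** \<rho>0 ** P m))"
proof -
  have sp: "spec D P" by unfold_locales (use proj orth complete in auto)
  have "AE \<omega> in M. \<forall>n\<in>{1..D}. real_cond_exp M F (\<lambda>\<omega>'. indicator {\<omega>'' \<in> space M. H \<omega>'' = E n} \<omega>') \<omega> = \<pi> n (\<xi> t \<omega>)"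
    by (rule AE_finite_allI) (simp_all add: ce)
  then show ?thesis
  proof (rule eventually_mono)
    fix \<omega> assume ce': "\<forall>n\<in>{1..D}. real_cond_exp M F (\<lambda>\<omega>'. indicator {\<omega>'' \<in> space M. H \<omega>'' = E n} \<omega>') \<omega> = \<pi> n (\<xi> t \<omega>)"
    show "\<rho> t \<omega> =
     (\<Sum>n\<in>{n\<in>{1..D}. p n > 0}.
        cscale (complex_of_real (real_cond_exp M (gen_filtration M \<xi> t)
                   (\<lambda>\<omega>'. indicator {\<omega>'' \<in> space M. H \<omega>'' = E n} \<omega>') \<omega>) / trace (\<rho>0 ** P n))
          (P n ** \<rho>0 ** P n))
   + (\<Sum>n=1..D. \<Sum>m\<in>{1..D} - {n}.
        cscale (exp (- \<i> * complex_of_real ((E n - E m) * t / hbar)) * complex_of_real (\<Phi> n m t \<omega>))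
          (P n ** \<rho>0 ** P m))"
      unfolding rho_def[of t \<omega>]
    proof (rule spec.rho_algebra[OF sp spectral dens p_def pnn K_def[of t \<omega>]])
      fix n assume "n \<in> {1..D}" "p n > 0"
      then show "real_cond_exp M (gen_filtration M \<xi> t) (\<lambda>\<omega>'. indicator {\<omega>'' \<in> space M. H \<omega>'' = E n} \<omega>') \<omega>
          = p n * exp (\<sigma> * E n * \<xi> t \<omega> - \<sigma>\<^sup>2 * (E n)\<^sup>2 * t / 2) /
            (\<Sum>r=1..D. p r * exp (\<sigma> * E r * \<xi> t \<omega> - \<sigma>\<^sup>2 * (E r)\<^sup>2 * t / 2))"
        using ce' by (simp add: F_def \<pi>_def f_def Z_def)
    next
      fix n m show "\<Phi> n m t \<omega> = exp (\<sigma> * (E n + E m) * \<xi> t \<omega> / 2 - \<sigma>\<^sup>2 * (E n + E m)\<^sup>2 * t / 8)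
        / (\<Sum>r=1..D. p r * exp (\<sigma> * E r * \<xi> t \<omega> - \<sigma>\<^sup>2 * (E r)\<^sup>2 * t / 2))
        * exp (- \<sigma>\<^sup>2 * (E n - E m)\<^sup>2 * t / 8)" by (rule Phi_def)
    qed simp
  qed
qed

end

theorem proposition8:
  fixes Hop :: "complex^'n^'n"   \<comment> \<open>Hamiltonian operator on the finite-dim Hilbert space complex^'n\<close>
    and D :: nat and E :: "nat \<Rightarrow> real" and P :: "nat \<Rightarrow> complex^'n^'n"
    and \<rho>0 :: "complex^'n^'n" and hbar \<sigma> :: real
    and M :: "'a measure" and B :: "real \<Rightarrow> 'a \<Rightarrow> real" and H :: "'a \<Rightarrow> real"
    and p :: "nat \<Rightarrow> real" and \<xi> :: "real \<Rightarrow> 'a \<Rightarrow> real"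
    and K \<rho> :: "real \<Rightarrow> 'a \<Rightarrow> complex^'n^'n" and \<Phi> :: "nat \<Rightarrow> nat \<Rightarrow> real \<Rightarrow> 'a \<Rightarrow> real"
    and t :: real
  assumes herm: "hermitian_mat Hop"
    and distinct: "inj_on E {1..D}"
    and proj: "\<And>r. r \<in> {1..D} \<Longrightarrow> orth_proj (P r) \<and> P r \<noteq> 0"
    and orth: "\<And>r s. r \<in> {1..D} \<Longrightarrow> s \<in> {1..D} \<Longrightarrow> r \<noteq> s \<Longrightarrow> P r ** P s = 0"
    and complete: "(\<Sum>r=1..D. P r) = mat 1"
    and spectral: "Hop = (\<Sum>r=1..D. cscale (complex_of_real (E r)) (P r))"
    and dens: "density_matrix \<rho>0"
    and p_def: "\<And>r. p r = Re (trace (\<rho>0 ** P r))"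
    and hbar: "hbar > 0" and sigma: "\<sigma> > 0"
    and PS: "prob_space M"
    and BM: "std_brownian_motion M B"
    and Hrv: "H \<in> borel_measurable M"
    and indep: "prob_space.indep_set M {H -` A \<inter> space M | A. A \<in> sets borel}
                  (sets (sigma (space M) {B s -` A \<inter> space M | s A. s \<ge> 0 \<and> A \<in> sets borel}))"
    and Hdist: "\<And>r. r \<in> {1..D} \<Longrightarrow> measure M {\<omega> \<in> space M. H \<omega> = E r} = p r"
    and xi_def: "\<And>s \<omega>. \<xi> s \<omega> = \<sigma> * s * H \<omega> + B s \<omega>"
    and K_def: "\<And>s \<omega>. K s \<omega> = mexp (cscale (- \<i> * complex_of_real (s / hbar)) Hop
                     + cscale (complex_of_real (\<sigma> * \<xi> s \<omega> / 2)) Hop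
                     - cscale (complex_of_real (\<sigma>\<^sup>2 * s / 4)) (Hop ** Hop))"
    and rho_def: "\<And>s \<omega>. \<rho> s \<omega> = cscale (1 / trace (K s \<omega> ** \<rho>0 ** adjoint_mat (K s \<omega>)))
                     (K s \<omega> ** \<rho>0 ** adjoint_mat (K s \<omega>))"
    and Phi_def: "\<And>n m s \<omega>. \<Phi> n m s \<omega> =
        exp (\<sigma> * (E n + E m) * \<xi> s \<omega> / 2 - \<sigma>\<^sup>2 * (E n + E m)\<^sup>2 * s / 8)
        / (\<Sum>r=1..D. p r * exp (\<sigma> * E r * \<xi> s \<omega> - \<sigma>\<^sup>2 * (E r)\<^sup>2 * s / 2))
        * exp (- \<sigma>\<^sup>2 * (E n - E m)\<^sup>2 * s / 8)"
    and t: "t \<ge> 0"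
  shows "AE \<omega> in M. \<rho> t \<omega> =
     (\<Sum>n\<in>{n\<in>{1..D}. p n > 0}.
        cscale (complex_of_real (real_cond_exp M (gen_filtration M \<xi> t)
                   (\<lambda>\<omega>'. indicator {\<omega>'' \<in> space M. H \<omega>'' = E n} \<omega>') \<omega>) / trace (\<rho>0 ** P n))
          (P n ** \<rho>0 ** P n))
   + (\<Sum>n=1..D. \<Sum>m\<in>{1..D} - {n}.
        cscale (exp (- \<i> * complex_of_real ((E n - E m) * t / hbar)) * complex_of_real (\<Phi> n m t \<omega>))
          (P n ** \<rho>0 ** P m))"
  proof -
  interpret setting Hop D E P \<rho>0 hbar \<sigma> M B H p \<xi> t
    using distinct proj orth complete dens p_def PS BM Hrv indep Hdist xi_def t by (rule setting.intro)
  show ?thesis by (rule final[OF spectral K_def rho_def Phi_def])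
qed

end
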